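(* A state over time function $\star$ satisfies axioms (T), (E), (P) and ($\hat{\mathrm{J}}$) if and only if there is, for each system $A$, a linear map $\Xi:\mathfrak{B}(A)\to\mathfrak{B}(A\otimes A')$ with $\Xi(\mathbb{1}_A)=0$, $F_{AA'}\Xi(\rho)F_{AA'}=\Xi(\rho)$ for all $\rho$, and $\mathrm{Tr}_A\circ\Xi=\mathrm{Tr}_{A'}\circ\Xi=0$, such that for all $\rho\in\mathfrak{S}(A)$ $$\mathrm{id}_{A'|A}\star\rho_A=\frac{1}{|A|}\Big(\mathrm{Tr}[\rho]F_{AA'}+\mathbb{1}_A\otimes\hat{\rho}_{A'}+\hat{\rho}_A\otimes\mathbb{1}_{A'}\Big)+\Xi(\rho),\qquad \hat{\rho}:=\rho-\frac{\mathrm{Tr}[\rho]}{|A|}\mathbb{1}_A,$$ and $\star$ is induced from this by $\mathcal{E}_{B|A}\star\rho_A=(\mathrm{id}_A\otimes\mathcal{E}_{B|A'})(\mathrm{id}_{A'|A}\star\rho_A)$ for all channels $\mathcal{E}_{B|A}$. The same statement holds with axiom (T) replaced by axiom (H) and the condition $F_{AA'}\Xi(\rho)F_{AA'}=\Xi(\rho)$ replaced by the condition that $\Xi$ is Hermitian-preserving.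
   Context: Systems are finite-dimensional Hilbert spaces; $\mathfrak{B}(A)$ linear operators, $\mathfrak{S}(A)$ density operators, $\mathfrak{C}(A,B)$ quantum channels (CPTP maps $\mathfrak{B}(A)\to\mathfrak{B}(B)$). $|A|=\dim A$, $\mathbb{1}_A$ identity, $\pi_A=\mathbb{1}_A/|A|$, $A'$ a copy of $A$, $\mathrm{id}_{A'|A}$ identity channel, $F_{AA'}$ swap operator, $\mathcal{E}_{B|A'}$ the map $\mathcal{E}_{B|A}$ acting on $A'$. A map is Hermitian-preserving if it maps Hermitian operators to Hermitian operators. A state over time function assigns to all systems $A,B$ a map $\star:\mathfrak{C}(A,B)\times\mathfrak{S}(A)\to\mathfrak{B}(A\otimes B)$ with $\mathrm{Tr}_A[\mathcal{E}\star\rho]=\mathcal{E}(\rho)$, $\mathrm{Tr}_B[\mathcal{E}\star\rho]=\rho$, extended homogeneously by $(\lambda\mathcal{E})\star\rho=\mathcal{E}\star(\lambda\rho)=\lambda(\mathcal{E}\star\rho)$, $\lambda\in\mathbb{C}$. A quantum state over spacetime on $A\otimes E$ is a density operator or an operator of the form $\mathcal{F}\star\sigma$. (E): for all $A,B,E$, every quantum state over spacetime $\rho_{AE}$ and channel $\mathcal{E}_{B|A}$, an operator $\mathcal{E}_{B|A}\star\rho_{AE}$ on $A\otimes B\otimes E$ is defined with $\mathcal{I}_E[\mathcal{E}\star\rho_{AE}]=\mathcal{E}\star\mathcal{I}_E(\rho_{AE})$ for every completely positive trace-non-increasing $\mathcal{I}_E$ on $E$, and $\mathrm{Tr}_A[\mathcal{E}\star\rho_{AE}]=(\mathcal{E}\otimes\mathrm{id}_E)(\rho_{AE})$.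 (A state-linear $\star$ satisfies (E) with the subsystem action $\mathcal{E}\star\rho_{AE}:=((\mathcal{E}\star\cdot)\otimes\mathrm{id}_E)(\rho_{AE})$.) (P): $\mathrm{Tr}_B[\mathcal{F}_{C|B}\star(\mathcal{E}_{B|A}\star\rho_A)]=(\mathcal{F}\circ\mathcal{E})_{C|A}\star\rho_A$ for all channels $\mathcal{E}_{B|A},\mathcal{F}_{C|B}$ and states $\rho_A$, with $\mathcal{F}_{C|B}\star(\cdot)$ acting on the $B$-part (spectator $A$). (T): $F_{AB}(\mathrm{id}_{B|A}\star\rho_A)F_{AB}=\mathrm{id}_{B|A}\star\rho_A$ for every $A$, $B$ a copy of $A$, $\rho_A\in\mathfrak{S}(A)$. (H): $\mathcal{E}_{B|A}\star\rho_A$ is Hermitian for every channel and state. ($\hat{\mathrm{J}}$): for every full system $A$ (not required for subspaces of larger systems regarded as systems) and every channel $\mathcal{E}_{B|A}$: $\mathcal{E}_{B|A}\star\pi_A=|A|^{-1}(\mathrm{id}_A\otimes\mathcal{E}_{B|A'})(F_{AA'})$. *)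

theory Defs
  imports "Jordan_Normal_Form.Matrix"
begin

text \<open>A system is represented by its dimension n (n > 0); operators on it are
complex n x n matrices. The tensor product of systems of dimensions n and m has
dimension n*m, with basis index (i,j) encoded as i*m+j (first factor = high digit).\<close>

type_synonym cmat = "complex mat"
type_synonym cmap = "complex mat \<Rightarrow> complex mat"

definition kron :: "nat \<Rightarrow> nat \<Rightarrow> cmat \<Rightarrow> cmat \<Rightarrow> cmat" where
  "kron n m X Y = mat (n*m) (n*m)
     (\<lambda>(r,c). X $$ (r div m, c div m) * Y $$ (r mod m, c mod m))"

definition ptr1 :: "nat \<Rightarrow> nat \<Rightarrow> cmat \<Rightarrow> cmat" where
  "ptr1 n m Z = mat m m (\<lambda>(j,l). \<Sum>i<n. Z $$ (i*m+j, i*m+l))"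

definition ptr2 :: "nat \<Rightarrow> nat \<Rightarrow> cmat \<Rightarrow> cmat" where
  "ptr2 n m Z = mat n n (\<lambda>(i,k). \<Sum>j<m. Z $$ (i*m+j, k*m+j))"

definition swap_op :: "nat \<Rightarrow> cmat" where
  "swap_op n = mat (n*n) (n*n)
     (\<lambda>(r,c). if r div n = c mod n \<and> r mod n = c div n then 1 else 0)"

text \<open>Canonical reordering isomorphism B(n (x) m) -> B(m (x) n) (conjugation by the swap
of tensor factors).\<close>
definition reorder :: "nat \<Rightarrow> nat \<Rightarrow> cmat \<Rightarrow> cmat" where
  "reorder n m X = mat (m*n) (m*n)
     (\<lambda>(r,c). X $$ ((r mod n)*m + r div n, (c mod n)*m + c div n))"

text \<open>(id_k (x) E)(X) for X on k (x) n, E a linear map B(n) -> B(m).\<close>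
definition app2 :: "nat \<Rightarrow> nat \<Rightarrow> nat \<Rightarrow> cmap \<Rightarrow> cmat \<Rightarrow> cmat" where
  "app2 k n m E X = mat (k*m) (k*m)
     (\<lambda>(r,c). (E (mat n n (\<lambda>(i,j). X $$ ((r div m)*n+i, (c div m)*n+j)))) $$ (r mod m, c mod m))"

text \<open>(E (x) id_k)(X) for X on n (x) k, E a linear map B(n) -> B(m).\<close>
definition app1 :: "nat \<Rightarrow> nat \<Rightarrow> nat \<Rightarrow> cmap \<Rightarrow> cmat \<Rightarrow> cmat" where
  "app1 n m k E X = mat (m*k) (m*k)
     (\<lambda>(r,c). (E (mat n n (\<lambda>(i,j). X $$ (i*k + r mod k, j*k + c mod k)))) $$ (r div k, c div k))"

definition mtrace :: "cmat \<Rightarrow> complex" where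
  "mtrace X = (\<Sum>i<dim_row X. X $$ (i,i))"

definition hermitian :: "nat \<Rightarrow> cmat \<Rightarrow> bool" where
  "hermitian n X \<longleftrightarrow> X \<in> carrier_mat n n \<and>
     (\<forall>i<n. \<forall>j<n. X $$ (j,i) = cnj (X $$ (i,j)))"

definition psd :: "nat \<Rightarrow> cmat \<Rightarrow> bool" where
  "psd n X \<longleftrightarrow> X \<in> carrier_mat n n \<and>
     (\<forall>v :: nat \<Rightarrow> complex. let q = (\<Sum>i<n. \<Sum>j<n. cnj (v i) * X $$ (i,j) * v j)
        in Im q = 0 \<and> Re q \<ge> 0)"

definition density :: "nat \<Rightarrow> cmat \<Rightarrow> bool" where
  "density n \<rho> \<longleftrightarrow> psd n \<rho> \<and> mtrace \<rho> = 1"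

definition linear_on :: "nat \<Rightarrow> nat \<Rightarrow> cmap \<Rightarrow> bool" where
  "linear_on n m E \<longleftrightarrow>
     (\<forall>X\<in>carrier_mat n n. E X \<in> carrier_mat m m) \<and>
     (\<forall>X\<in>carrier_mat n n. \<forall>Y\<in>carrier_mat n n. E (X + Y) = E X + E Y) \<and>
     (\<forall>X\<in>carrier_mat n n. \<forall>c. E (c \<cdot>\<^sub>m X) = c \<cdot>\<^sub>m E X)"

definition completely_positive :: "nat \<Rightarrow> nat \<Rightarrow> cmap \<Rightarrow> bool" where
  "completely_positive n m E \<longleftrightarrow>
     (\<forall>k>0. \<forall>X. psd (k*n) X \<longrightarrow> psd (k*m) (app2 k n m E X))"

definition channel :: "nat \<Rightarrow> nat \<Rightarrow> cmap \<Rightarrow> bool" where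
  "channel n m E \<longleftrightarrow> linear_on n m E \<and> completely_positive n m E \<and>
     (\<forall>X\<in>carrier_mat n n. mtrace (E X) = mtrace X)"

definition cp_tni :: "nat \<Rightarrow> nat \<Rightarrow> cmap \<Rightarrow> bool" where
  "cp_tni n m E \<longleftrightarrow> linear_on n m E \<and> completely_positive n m E \<and>
     (\<forall>X. psd n X \<longrightarrow> Re (mtrace (E X)) \<le> Re (mtrace X))"

definition hermitian_preserving :: "nat \<Rightarrow> nat \<Rightarrow> cmap \<Rightarrow> bool" where
  "hermitian_preserving n m E \<longleftrightarrow> (\<forall>X. hermitian n X \<longrightarrow> hermitian m (E X))"

text \<open>star n m E \<rho> is E_{B|A} \<star> \<rho>_A for |A| = n, |B| = m, an operator on A (x) B.\<close>
type_synonym sotf = "nat \<Rightarrow> nat \<Rightarrow> cmap \<Rightarrow> cmat \<Rightarrow> cmat"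

definition state_over_time_function :: "sotf \<Rightarrow> bool" where
  "state_over_time_function star \<longleftrightarrow>
     (\<forall>n>0. \<forall>m>0. \<forall>E \<rho>. channel n m E \<and> density n \<rho> \<longrightarrow>
        star n m E \<rho> \<in> carrier_mat (n*m) (n*m) \<and>
        ptr1 n m (star n m E \<rho>) = E \<rho> \<and>
        ptr2 n m (star n m E \<rho>) = \<rho>)"

text \<open>Quantum states over spacetime on A (x) E (|A| = n, |E| = e): density operators, or
F \<star> \<sigma> with F a channel between the two factors (in either direction; for F_{A|E} the
result is reordered to A (x) E).\<close>
definition qsst :: "sotf \<Rightarrow> nat \<Rightarrow> nat \<Rightarrow> cmat \<Rightarrow> bool" where
  "qsst star n e X \<longleftrightarrow> density (n*e) X \<or>
     (\<exists>F \<sigma>. channel n e F \<and> density n \<sigma> \<and> X = star n e F \<sigma>) \<or>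
     (\<exists>F \<sigma>. channel e n F \<and> density e \<sigma> \<and> X = reorder e n (star e n F \<sigma>))"

text \<open>Axiom (E), for a given subsystem action ext: ext n m e E X is E_{B|A} \<star> X_{AE}
(|A| = n, |B| = m, |E| = e), an operator on A (x) B (x) E. It extends \<star> (trivial E).\<close>
definition axiom_E_with :: "sotf \<Rightarrow> (nat \<Rightarrow> nat \<Rightarrow> nat \<Rightarrow> cmap \<Rightarrow> cmat \<Rightarrow> cmat) \<Rightarrow> bool" where
  "axiom_E_with star ext \<longleftrightarrow>
     (\<forall>n>0. \<forall>m>0. \<forall>E \<rho>. channel n m E \<and> density n \<rho> \<longrightarrow> ext n m 1 E \<rho> = star n m E \<rho>) \<and>
     (\<forall>n>0. \<forall>m>0. \<forall>e>0. \<forall>E X. channel n m E \<and> qsst star n e X \<longrightarrow>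
        ext n m e E X \<in> carrier_mat (n*m*e) (n*m*e) \<and>
        (\<forall>e'>0. \<forall>I. cp_tni e e' I \<longrightarrow>
            app2 (n*m) e e' I (ext n m e E X) = ext n m e' E (app2 n e e' I X)) \<and>
        ptr1 n (m*e) (ext n m e E X) = app1 n m e E X)"

definition axiom_E :: "sotf \<Rightarrow> bool" where
  "axiom_E star \<longleftrightarrow> (\<exists>ext. axiom_E_with star ext)"

text \<open>Axiom (P), relative to the subsystem action ext from (E): F_{C|B} acts on the B part
of E_{B|A} \<star> \<rho>_A (regarded on B (x) A with spectator A); the result lives on B (x) C (x) A,
B is traced out and the remaining C (x) A is reordered to A (x) C.\<close>
definition axiom_P_with :: "sotf \<Rightarrow> (nat \<Rightarrow> nat \<Rightarrow> nat \<Rightarrow> cmap \<Rightarrow> cmat \<Rightarrow> cmat) \<Rightarrow> bool" where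
  "axiom_P_with star ext \<longleftrightarrow>
     (\<forall>n>0. \<forall>m>0. \<forall>k>0. \<forall>E F \<rho>. channel n m E \<and> channel m k F \<and> density n \<rho> \<longrightarrow>
        reorder k n (ptr1 m (k*n) (ext m k n F (reorder n m (star n m E \<rho>))))
          = star n k (F \<circ> E) \<rho>)"

definition axiom_EP :: "sotf \<Rightarrow> bool" where
  "axiom_EP star \<longleftrightarrow> (\<exists>ext. axiom_E_with star ext \<and> axiom_P_with star ext)"

definition axiom_T :: "sotf \<Rightarrow> bool" where
  "axiom_T star \<longleftrightarrow> (\<forall>n>0. \<forall>\<rho>. density n \<rho> \<longrightarrow>
     swap_op n * star n n id \<rho> * swap_op n = star n n id \<rho>)"

definition axiom_H :: "sotf \<Rightarrow> bool" where
  "axiom_H star \<longleftrightarrow> (\<forall>n>0. \<forall>m>0. \<forall>E \<rho>. channel n m E \<and> density n \<rho> \<longrightarrow>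
     hermitian (n*m) (star n m E \<rho>))"

definition axiom_Jhat :: "sotf \<Rightarrow> bool" where
  "axiom_Jhat star \<longleftrightarrow> (\<forall>n>0. \<forall>m>0. \<forall>E. channel n m E \<longrightarrow>
     star n m E ((1 / of_nat n) \<cdot>\<^sub>m 1\<^sub>m n) = (1 / of_nat n) \<cdot>\<^sub>m app2 n n m E (swap_op n))"

definition rho_hat :: "nat \<Rightarrow> cmat \<Rightarrow> cmat" where
  "rho_hat n \<rho> = \<rho> - (mtrace \<rho> / of_nat n) \<cdot>\<^sub>m 1\<^sub>m n"

definition id_star_form :: "nat \<Rightarrow> cmap \<Rightarrow> cmat \<Rightarrow> cmat" where
  "id_star_form n \<Xi> \<rho> =
     (1 / of_nat n) \<cdot>\<^sub>m (mtrace \<rho> \<cdot>\<^sub>m swap_op n + kron n n (1\<^sub>m n) (rho_hat n \<rho>)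
                          + kron n n (rho_hat n \<rho>) (1\<^sub>m n)) + \<Xi> \<rho>"

definition Xi_basic :: "(nat \<Rightarrow> cmap) \<Rightarrow> bool" where
  "Xi_basic \<Xi> \<longleftrightarrow> (\<forall>n>0. linear_on n (n*n) (\<Xi> n) \<and>
     \<Xi> n (1\<^sub>m n) = 0\<^sub>m (n*n) (n*n) \<and>
     (\<forall>X\<in>carrier_mat n n. ptr1 n n (\<Xi> n X) = 0\<^sub>m n n \<and> ptr2 n n (\<Xi> n X) = 0\<^sub>m n n))"

definition induced_by :: "sotf \<Rightarrow> (nat \<Rightarrow> cmap) \<Rightarrow> bool" where
  "induced_by star \<Xi> \<longleftrightarrow>
     (\<forall>n>0. \<forall>\<rho>. density n \<rho> \<longrightarrow> star n n id \<rho> = id_star_form n (\<Xi> n) \<rho>) \<and>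
     (\<forall>n>0. \<forall>m>0. \<forall>E \<rho>. channel n m E \<and> density n \<rho> \<longrightarrow>
        star n m E \<rho> = app2 n n m E (star n n id \<rho>))"

end

theory Submission
  imports Defs
begin

lemma sum_pair: fixes k m :: nat shows "(\<Sum>t<k*m. g t) = (\<Sum>r<k. \<Sum>u<m. g (r*m+u))"
proof (induction k)
  case 0 then show ?case by simp
next
  case (Suc k)
  have "(\<Sum>t<Suc k*m. g t) = sum g {0..<k*m} + sum g {k*m..<k*m+m}"
    by (simp add: sum.atLeastLessThan_concat lessThan_atLeast0 add.commute)
  also have "sum g {k*m..<k*m+m} = (\<Sum>u<m. g (k*m+u))"
    using sum.shift_bounds_nat_ivl[of g 0 "k*m" m] by (simp add: lessThan_atLeast0 add.commute)
  finally show ?case using Suc by (simp add: lessThan_atLeast0)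
qed

lemma sum_pair2: fixes k :: nat shows "(\<Sum>t<k*2. g t) = (\<Sum>r<k. g (r*2) + g (r*2+1))"
  by (simp only: sum_pair) (simp add: numeral_2_eq_2)

definition msum :: "nat \<Rightarrow> 'k set \<Rightarrow> ('k \<Rightarrow> complex) \<Rightarrow> ('k \<Rightarrow> cmat) \<Rightarrow> cmat" where
  "msum d K c M = mat d d (\<lambda>(r,s). \<Sum>k\<in>K. c k * M k $$ (r,s))"

lemma msum_carrier[simp]: "msum d K c M \<in> carrier_mat d d"
  by (simp add: msum_def)
lemma msum_dim[simp]: "dim_row (msum d K c M) = d" "dim_col (msum d K c M) = d"
  by (auto simp: msum_def)
lemma msum_index[simp]: "r < d \<Longrightarrow> s < d \<Longrightarrow> msum d K c M $$ (r,s) = (\<Sum>k\<in>K. c k * M k $$ (r,s))"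
  by (simp add: msum_def)

definition qf :: "nat \<Rightarrow> cmat \<Rightarrow> (nat \<Rightarrow> complex) \<Rightarrow> complex" where
  "qf n X v = (\<Sum>i<n. \<Sum>j<n. cnj (v i) * X $$ (i,j) * v j)"

lemma psd_iff: "psd n X \<longleftrightarrow> X \<in> carrier_mat n n \<and> (\<forall>v. Im (qf n X v) = 0 \<and> Re (qf n X v) \<ge> 0)"
  unfolding psd_def qf_def Let_def by simp

definition unitm :: "nat \<Rightarrow> nat \<Rightarrow> nat \<Rightarrow> cmat" where
  "unitm n i j = mat n n (\<lambda>(a,b). if a = i \<and> b = j then 1 else 0)"

lemma linear_on_zero:
  assumes "linear_on n m E"
  shows "E (0\<^sub>m n n) = 0\<^sub>m m m"
proof -
  have z: "0 \<cdot>\<^sub>m (0\<^sub>m n n :: cmat) = 0\<^sub>m n n" by (rule eq_matI) auto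
  have "E (0 \<cdot>\<^sub>m 0\<^sub>m n n) = 0 \<cdot>\<^sub>m E (0\<^sub>m n n)" using assms unfolding linear_on_def by (metis zero_carrier_mat)
  moreover have "E (0\<^sub>m n n) \<in> carrier_mat m m" using assms unfolding linear_on_def by auto
  moreover have "\<And>Y::cmat. Y \<in> carrier_mat m m \<Longrightarrow> 0 \<cdot>\<^sub>m Y = 0\<^sub>m m m" by (rule eq_matI) auto
  ultimately show ?thesis using z by metis
qed

lemma msum_insert: "finite K \<Longrightarrow> a \<notin> K \<Longrightarrow> (\<And>k. k \<in> insert a K \<Longrightarrow> M k \<in> carrier_mat d d) \<Longrightarrow>
   msum d (insert a K) c M = c a \<cdot>\<^sub>m M a + msum d K c M"
proof -
  assume h: "finite K" "a \<notin> K" "\<And>k. k \<in> insert a K \<Longrightarrow> M k \<in> carrier_mat d d"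
  have ca: "dim_row (M a) = d" "dim_col (M a) = d" using h(3) by auto
  show ?thesis by (rule eq_matI) (use h ca in \<open>auto simp: sum.insert\<close>)
qed

lemma msum_empty: "msum d {} c M = 0\<^sub>m d d"
  by (rule eq_matI) auto

lemma linear_on_msum:
  assumes "linear_on n m E" "finite K" "\<And>k. k \<in> K \<Longrightarrow> M k \<in> carrier_mat n n"
  shows "E (msum n K c M) = msum m K c (\<lambda>k. E (M k))"
  using assms(2,3)
proof (induction K rule: finite_induct)
  case empty
  then show ?case using linear_on_zero[OF assms(1)] by (simp add: msum_empty)
next
  case (insert a K)
  have ca: "M a \<in> carrier_mat n n" using insert by auto
  have "E (msum n (insert a K) c M) = E (c a \<cdot>\<^sub>m M a + msum n K c M)"
    using insert by (subst msum_insert) auto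
  also have "\<dots> = E (c a \<cdot>\<^sub>m M a) + E (msum n K c M)"
    using assms(1) ca unfolding linear_on_def by auto
  also have "\<dots> = c a \<cdot>\<^sub>m E (M a) + msum m K c (\<lambda>k. E (M k))"
    using assms(1) ca insert unfolding linear_on_def by auto
  also have "\<dots> = msum m (insert a K) c (\<lambda>k. E (M k))"
    using insert assms(1) unfolding linear_on_def by (subst msum_insert) auto
  finally show ?case .
qed

lemma unit_decomp:
  assumes "X \<in> carrier_mat n n"
  shows "X = msum n ({..<n} \<times> {..<n}) (\<lambda>(i,j). X $$ (i,j)) (\<lambda>(i,j). unitm n i j)"
proof (rule eq_matI)
  fix r s assume rs: "r < dim_row (msum n ({..<n} \<times> {..<n}) (\<lambda>(i,j). X $$ (i,j)) (\<lambda>(i,j). unitm n i j))"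
     "s < dim_col (msum n ({..<n} \<times> {..<n}) (\<lambda>(i,j). X $$ (i,j)) (\<lambda>(i,j). unitm n i j))"
  hence r: "r < n" "s < n" by auto
  have "(\<Sum>k\<in>{..<n} \<times> {..<n}. (case k of (i,j) \<Rightarrow> X $$ (i,j)) * (case k of (i,j) \<Rightarrow> unitm n i j) $$ (r,s))
      = (\<Sum>k\<in>{(r,s)}. (case k of (i,j) \<Rightarrow> X $$ (i,j)) * (case k of (i,j) \<Rightarrow> unitm n i j) $$ (r,s))"
    by (rule sum.mono_neutral_right) (use r in \<open>auto simp: unitm_def split: if_splits\<close>)
  also have "\<dots> = X $$ (r,s)" using r by (simp add: unitm_def)
  finally show "X $$ (r,s) = msum n ({..<n} \<times> {..<n}) (\<lambda>(i,j). X $$ (i,j)) (\<lambda>(i,j). unitm n i j) $$ (r,s)"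
    using r by simp
qed (use assms in auto)

lemma linear_rep:
  assumes "linear_on n m E" "X \<in> carrier_mat n n" "a < m" "b < m"
  shows "E X $$ (a,b) = (\<Sum>i<n. \<Sum>j<n. X $$ (i,j) * E (unitm n i j) $$ (a,b))"
proof -
  have "E X = msum m ({..<n} \<times> {..<n}) (\<lambda>(i,j). X $$ (i,j)) (\<lambda>k. E ((\<lambda>(i,j). unitm n i j) k))"
    by (subst unit_decomp[OF assms(2)], rule linear_on_msum[OF assms(1)]) (auto simp: unitm_def)
  hence "E X $$ (a,b) = (\<Sum>k\<in>{..<n} \<times> {..<n}. (case k of (i,j) \<Rightarrow> X $$ (i,j)) * E (case k of (i,j) \<Rightarrow> unitm n i j) $$ (a,b))"
    using assms by simp
  also have "\<dots> = (\<Sum>i<n. \<Sum>j<n. X $$ (i,j) * E (unitm n i j) $$ (a,b))"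
    by (simp add: sum.cartesian_product split_def)
  finally show ?thesis .
qed

lemma dm_div[simp]: "(i::nat) < n \<Longrightarrow> (R*n + i) div n = R"
  by simp
lemma dm_mod[simp]: "(i::nat) < n \<Longrightarrow> (R*n + i) mod n = i"
  by simp
lemma dm_lt: "(R::nat) < k \<Longrightarrow> i < n \<Longrightarrow> R*n + i < k*n"
proof -
  assume "R < k" "i < n"
  hence "R*n + i < R*n + n" by simp
  also have "\<dots> = Suc R * n" by simp
  also have "\<dots> \<le> k * n" using \<open>R < k\<close> by (intro mult_le_mono1) simp
  finally show ?thesis .
qed
lemma div_lt: "(r::nat) < k*n \<Longrightarrow> r div n < k"
  by (simp add: less_mult_imp_div_less)
lemma mod_lt: "(r::nat) < k*n \<Longrightarrow> r mod n < n"
  by (cases "n = 0") auto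

lemma app2_carrier[simp]: "app2 k n m E X \<in> carrier_mat (k*m) (k*m)"
  by (simp add: app2_def)
lemma app2_dim[simp]: "dim_row (app2 k n m E X) = k*m" "dim_col (app2 k n m E X) = k*m"
  by (auto simp: app2_def)
lemma app1_carrier[simp]: "app1 n m k E X \<in> carrier_mat (m*k) (m*k)"
  by (simp add: app1_def)
lemma app1_dim[simp]: "dim_row (app1 n m k E X) = m*k" "dim_col (app1 n m k E X) = m*k"
  by (auto simp: app1_def)

lemma app2_index: "r < k*m \<Longrightarrow> c < k*m \<Longrightarrow> app2 k n m E X $$ (r,c) =
   E (mat n n (\<lambda>(i,j). X $$ ((r div m)*n+i, (c div m)*n+j))) $$ (r mod m, c mod m)"
  by (simp add: app2_def)

lemma app1_index: "r < m*k \<Longrightarrow> c < m*k \<Longrightarrow> app1 n m k E X $$ (r,c) =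
   E (mat n n (\<lambda>(i,j). X $$ (i*k + r mod k, j*k + c mod k))) $$ (r div k, c div k)"
  by (simp add: app1_def)

lemma app2_id: assumes "X \<in> carrier_mat (k*n) (k*n)" shows "app2 k n n id X = X"
proof (rule eq_matI)
  fix r c assume "r < dim_row X" "c < dim_col X"
  hence rc: "r < k*n" "c < k*n" using assms by auto
  show "app2 k n n id X $$ (r,c) = X $$ (r,c)"
    using rc by (simp add: app2_index mod_lt)
qed (use assms in auto)

lemma blk_eqI: "A \<in> carrier_mat n n \<Longrightarrow> (\<And>i j. i < n \<Longrightarrow> j < n \<Longrightarrow> A $$ (i,j) = f (i,j)) \<Longrightarrow> mat n n f = A"
  by (rule eq_matI) auto

lemma app2_comp:
  assumes "\<forall>Y\<in>carrier_mat n n. E Y \<in> carrier_mat m m"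
  shows "app2 k m l F (app2 k n m E X) = app2 k n l (F \<circ> E) X"
proof (rule eq_matI)
  fix r c assume "r < dim_row (app2 k n l (F \<circ> E) X)" "c < dim_col (app2 k n l (F \<circ> E) X)"
  hence rc: "r < k*l" "c < k*l" by auto
  have "mat m m (\<lambda>(i,j). app2 k n m E X $$ ((r div l)*m+i, (c div l)*m+j))
      = E (mat n n (\<lambda>(i,j). X $$ ((r div l)*n+i, (c div l)*n+j)))"
    by (rule blk_eqI) (use assms rc in \<open>auto simp: app2_index dm_lt div_lt\<close>)
  then show "app2 k m l F (app2 k n m E X) $$ (r,c) = app2 k n l (F \<circ> E) X $$ (r,c)"
    using rc by (simp add: app2_index)
qed auto

lemma ptr1_app2:
  assumes "linear_on n m E" "X \<in> carrier_mat (k*n) (k*n)"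
  shows "ptr1 k m (app2 k n m E X) = E (ptr1 k n X)"
proof (rule eq_matI)
  have Ec: "E (ptr1 k n X) \<in> carrier_mat m m" using assms(1) unfolding linear_on_def ptr1_def by auto
  fix a b assume "a < dim_row (E (ptr1 k n X))" "b < dim_col (E (ptr1 k n X))"
  hence ab: "a < m" "b < m" using Ec by auto
  have "ptr1 k m (app2 k n m E X) $$ (a,b) = (\<Sum>R<k. app2 k n m E X $$ (R*m+a, R*m+b))"
    using ab by (simp add: ptr1_def)
  also have "\<dots> = (\<Sum>R<k. E (mat n n (\<lambda>(i,j). X $$ (R*n+i, R*n+j))) $$ (a,b))"
    by (rule sum.cong) (use ab in \<open>auto simp: app2_index dm_lt\<close>)
  also have "\<dots> = (\<Sum>R<k. \<Sum>i<n. \<Sum>j<n. X $$ (R*n+i, R*n+j) * E (unitm n i j) $$ (a,b))"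
    by (rule sum.cong) (use ab in \<open>auto simp: linear_rep[OF assms(1)]\<close>)
  also have "\<dots> = (\<Sum>i<n. \<Sum>j<n. (\<Sum>R<k. X $$ (R*n+i, R*n+j)) * E (unitm n i j) $$ (a,b))"
    by (simp add: sum.swap[of _ "{..<k}"] sum_distrib_right)
  also have "\<dots> = E (ptr1 k n X) $$ (a,b)"
    by (subst linear_rep[OF assms(1)]) (auto simp: ab ptr1_def)
  finally show "ptr1 k m (app2 k n m E X) $$ (a,b) = E (ptr1 k n X) $$ (a,b)" .
qed (use assms(1) in \<open>auto simp: ptr1_def linear_on_def\<close>)

lemma app2_add:
  assumes "linear_on n m E" "X \<in> carrier_mat (k*n) (k*n)" "Y \<in> carrier_mat (k*n) (k*n)"
  shows "app2 k n m E (X + Y) = app2 k n m E X + app2 k n m E Y"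
proof (rule eq_matI)
  fix r c assume "r < dim_row (app2 k n m E X + app2 k n m E Y)" "c < dim_col (app2 k n m E X + app2 k n m E Y)"
  hence rc: "r < k*m" "c < k*m" by auto
  have "mat n n (\<lambda>(i,j). (X+Y) $$ ((r div m)*n+i, (c div m)*n+j)) =
    mat n n (\<lambda>(i,j). X $$ ((r div m)*n+i, (c div m)*n+j)) + mat n n (\<lambda>(i,j). Y $$ ((r div m)*n+i, (c div m)*n+j))"
    by (rule eq_matI) (use assms rc in \<open>auto simp: dm_lt div_lt\<close>)
  moreover have "E (mat n n (\<lambda>(i,j). X $$ ((r div m)*n+i, (c div m)*n+j)) + mat n n (\<lambda>(i,j). Y $$ ((r div m)*n+i, (c div m)*n+j)))
     = E (mat n n (\<lambda>(i,j). X $$ ((r div m)*n+i, (c div m)*n+j))) + E (mat n n (\<lambda>(i,j). Y $$ ((r div m)*n+i, (c div m)*n+j)))"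
    using assms(1) unfolding linear_on_def by auto
  moreover have "E (mat n n (\<lambda>(i,j). X $$ ((r div m)*n+i, (c div m)*n+j))) \<in> carrier_mat m m"
    "E (mat n n (\<lambda>(i,j). Y $$ ((r div m)*n+i, (c div m)*n+j))) \<in> carrier_mat m m"
    using assms(1) unfolding linear_on_def by auto
  ultimately show "app2 k n m E (X + Y) $$ (r,c) = (app2 k n m E X + app2 k n m E Y) $$ (r,c)"
    using rc by (simp add: app2_index mod_lt)
qed auto

lemma app2_smult:
  assumes "linear_on n m E" "X \<in> carrier_mat (k*n) (k*n)"
  shows "app2 k n m E (a \<cdot>\<^sub>m X) = a \<cdot>\<^sub>m app2 k n m E X"
proof (rule eq_matI)
  fix r c assume "r < dim_row (a \<cdot>\<^sub>m app2 k n m E X)" "c < dim_col (a \<cdot>\<^sub>m app2 k n m E X)"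
  hence rc: "r < k*m" "c < k*m" by auto
  have "mat n n (\<lambda>(i,j). (a \<cdot>\<^sub>m X) $$ ((r div m)*n+i, (c div m)*n+j)) =
    a \<cdot>\<^sub>m mat n n (\<lambda>(i,j). X $$ ((r div m)*n+i, (c div m)*n+j))"
    by (rule eq_matI) (use assms rc in \<open>auto simp: dm_lt div_lt\<close>)
  moreover have "E (a \<cdot>\<^sub>m mat n n (\<lambda>(i,j). X $$ ((r div m)*n+i, (c div m)*n+j)))
     = a \<cdot>\<^sub>m E (mat n n (\<lambda>(i,j). X $$ ((r div m)*n+i, (c div m)*n+j)))"
    using assms(1) unfolding linear_on_def by auto
  moreover have "E (mat n n (\<lambda>(i,j). X $$ ((r div m)*n+i, (c div m)*n+j))) \<in> carrier_mat m m"
    using assms(1) unfolding linear_on_def by auto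
  ultimately show "app2 k n m E (a \<cdot>\<^sub>m X) $$ (r,c) = (a \<cdot>\<^sub>m app2 k n m E X) $$ (r,c)"
    using rc by (simp add: app2_index mod_lt)
qed auto

lemma sum4_swap: "(\<Sum>u\<in>A. \<Sum>v\<in>B. \<Sum>i\<in>C. \<Sum>j\<in>D. f u v i j) = (\<Sum>i\<in>C. \<Sum>j\<in>D. \<Sum>u\<in>A. \<Sum>v\<in>B. f u v i j)"
proof -
  have "(\<Sum>u\<in>A. \<Sum>v\<in>B. \<Sum>i\<in>C. \<Sum>j\<in>D. f u v i j) = (\<Sum>u\<in>A. \<Sum>i\<in>C. \<Sum>v\<in>B. \<Sum>j\<in>D. f u v i j)"
    by (rule sum.cong[OF refl], rule sum.swap)
  also have "\<dots> = (\<Sum>i\<in>C. \<Sum>u\<in>A. \<Sum>v\<in>B. \<Sum>j\<in>D. f u v i j)"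
    by (rule sum.swap)
  also have "\<dots> = (\<Sum>i\<in>C. \<Sum>u\<in>A. \<Sum>j\<in>D. \<Sum>v\<in>B. f u v i j)"
    by (rule sum.cong[OF refl], rule sum.cong[OF refl], rule sum.swap)
  also have "\<dots> = (\<Sum>i\<in>C. \<Sum>j\<in>D. \<Sum>u\<in>A. \<Sum>v\<in>B. f u v i j)"
    by (rule sum.cong[OF refl], rule sum.swap)
  finally show ?thesis .
qed

lemma app2_app1_comm:
  assumes Phi: "linear_on n m Phi" and I: "linear_on e e' I" and X: "X \<in> carrier_mat (n*e) (n*e)"
  shows "app2 m e e' I (app1 n m e Phi X) = app1 n m e' Phi (app2 n e e' I X)"
proof (rule eq_matI)
  fix r c assume "r < dim_row (app1 n m e' Phi (app2 n e e' I X))" "c < dim_col (app1 n m e' Phi (app2 n e e' I X))"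
  hence rc: "r < m*e'" "c < m*e'" by auto
  define R C s t where "R = r div e'" "C = c div e'" "s = r mod e'" "t = c mod e'"
  have RC: "R < m" "C < m" "s < e'" "t < e'" using rc by (auto simp: R_C_s_t_def div_lt mod_lt)
  have "app2 m e e' I (app1 n m e Phi X) $$ (r,c) =
     I (mat e e (\<lambda>(u,v). Phi (mat n n (\<lambda>(i,j). X $$ (i*e+u, j*e+v))) $$ (R,C))) $$ (s,t)"
  proof -
    have "mat e e (\<lambda>(u,v). app1 n m e Phi X $$ (R*e+u, C*e+v)) =
       mat e e (\<lambda>(u,v). Phi (mat n n (\<lambda>(i,j). X $$ (i*e+u, j*e+v))) $$ (R,C))"
      by (rule eq_matI) (use RC in \<open>auto simp: app1_index dm_lt\<close>)
    then show ?thesis using rc by (simp add: app2_index R_C_s_t_def)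
  qed
  also have "\<dots> = (\<Sum>u<e. \<Sum>v<e. (\<Sum>i<n. \<Sum>j<n. X $$ (i*e+u, j*e+v) * Phi (unitm n i j) $$ (R,C)) * I (unitm e u v) $$ (s,t))"
    by (subst linear_rep[OF I]) (auto simp: RC linear_rep[OF Phi])
  also have "\<dots> = (\<Sum>u<e. \<Sum>v<e. \<Sum>i<n. \<Sum>j<n. X $$ (i*e+u, j*e+v) * Phi (unitm n i j) $$ (R,C) * I (unitm e u v) $$ (s,t))"
    by (simp add: sum_distrib_right)
  also have "\<dots> = (\<Sum>i<n. \<Sum>j<n. \<Sum>u<e. \<Sum>v<e. X $$ (i*e+u, j*e+v) * Phi (unitm n i j) $$ (R,C) * I (unitm e u v) $$ (s,t))"
    by (rule sum4_swap)
  also have "\<dots> = (\<Sum>i<n. \<Sum>j<n. (\<Sum>u<e. \<Sum>v<e. X $$ (i*e+u, j*e+v) * I (unitm e u v) $$ (s,t)) * Phi (unitm n i j) $$ (R,C))"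
    by (simp add: sum_distrib_right sum_distrib_left mult_ac)
  also have "\<dots> = Phi (mat n n (\<lambda>(i,j). I (mat e e (\<lambda>(u,v). X $$ (i*e+u, j*e+v))) $$ (s,t))) $$ (R,C)"
    by (subst linear_rep[OF Phi]) (auto simp: RC linear_rep[OF I])
  also have "\<dots> = app1 n m e' Phi (app2 n e e' I X) $$ (r,c)"
  proof -
    have "mat n n (\<lambda>(i,j). app2 n e e' I X $$ (i*e'+s, j*e'+t)) =
       mat n n (\<lambda>(i,j). I (mat e e (\<lambda>(u,v). X $$ (i*e+u, j*e+v))) $$ (s,t))"
      by (rule eq_matI) (use RC in \<open>auto simp: app2_index dm_lt\<close>)
    then show ?thesis using rc by (simp add: app1_index R_C_s_t_def)
  qed
  finally show "app2 m e e' I (app1 n m e Phi X) $$ (r,c) = app1 n m e' Phi (app2 n e e' I X) $$ (r,c)" .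
qed auto

lemma ptr1_app1:
  shows "ptr1 n (m*e) (app1 n (n*m) e Phi X) = app1 n m e (\<lambda>Y. ptr1 n m (Phi Y)) X"
proof (rule eq_matI)
  fix a b assume "a < dim_row (app1 n m e (\<lambda>Y. ptr1 n m (Phi Y)) X)" "b < dim_col (app1 n m e (\<lambda>Y. ptr1 n m (Phi Y)) X)"
  hence ab: "a < m*e" "b < m*e" by auto
  hence e: "e > 0" by (cases e) auto
  have ad: "a div e < m" "b div e < m" using ab by (auto simp: div_lt)
  have ar: "\<And>i. (i*(m*e)+a) div e = i*m + a div e" "\<And>i. (i*(m*e)+b) div e = i*m + b div e"
    "\<And>i. (i*(m*e)+a) mod e = a mod e" "\<And>i. (i*(m*e)+b) mod e = b mod e"
    using e by (simp_all add: mult.assoc[symmetric])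
  have lt: "\<And>i. i < n \<Longrightarrow> i*(m*e)+a < n*m*e" "\<And>i. i < n \<Longrightarrow> i*(m*e)+b < n*m*e"
    using dm_lt ab by (auto simp: mult.assoc)
  have "ptr1 n (m*e) (app1 n (n*m) e Phi X) $$ (a,b) = (\<Sum>i<n. app1 n (n*m) e Phi X $$ (i*(m*e)+a, i*(m*e)+b))"
    using ab by (simp add: ptr1_def)
  also have "\<dots> = (\<Sum>i<n. Phi (mat n n (\<lambda>(i',j'). X $$ (i'*e + a mod e, j'*e + b mod e))) $$ (i*m + a div e, i*m + b div e))"
    by (rule sum.cong) (auto simp: app1_index lt ar)
  also have "\<dots> = app1 n m e (\<lambda>Y. ptr1 n m (Phi Y)) X $$ (a,b)"
    using ab ad by (simp add: app1_index ptr1_def)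
  finally show "ptr1 n (m*e) (app1 n (n*m) e Phi X) $$ (a,b) = app1 n m e (\<lambda>Y. ptr1 n m (Phi Y)) X $$ (a,b)" .
qed (auto simp: ptr1_def)

lemma app1_cong: "(\<And>Y. Y \<in> carrier_mat n n \<Longrightarrow> F Y = G Y) \<Longrightarrow> app1 n m k F X = app1 n m k G X"
  unfolding app1_def by (rule cong_mat) auto

lemma app2_cong: "(\<And>Y. Y \<in> carrier_mat n n \<Longrightarrow> F Y = G Y) \<Longrightarrow> app2 k n m F X = app2 k n m G X"
  unfolding app2_def by (rule cong_mat) auto

lemma reorder_app1: "reorder k n (app1 m k n F (reorder n m W)) = app2 n m k F W"
proof (rule eq_matI)
  fix r c assume "r < dim_row (app2 n m k F W)" "c < dim_col (app2 n m k F W)"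
  hence rc: "r < n*k" "c < n*k" by auto
  have d: "r div k < n" "c div k < n" "r mod k < k" "c mod k < k" using rc by (auto simp: div_lt mod_lt)
  have lt: "(r mod k)*n + r div k < k*n" "(c mod k)*n + c div k < k*n" using d dm_lt by auto
  have "mat m m (\<lambda>(i,j). reorder n m W $$ (i*n + r div k, j*n + c div k)) =
      mat m m (\<lambda>(i,j). W $$ ((r div k)*m + i, (c div k)*m + j))"
    by (rule cong_mat) (auto simp: reorder_def d dm_lt[of _ m _ n, simplified mult.commute] dm_lt)
  then show "reorder k n (app1 m k n F (reorder n m W)) $$ (r,c) = app2 n m k F W $$ (r,c)"
    using rc lt d by (simp add: reorder_def app1_index app2_index)
qed (auto simp: reorder_def)

lemma app1_one: assumes "X \<in> carrier_mat n n" "F X \<in> carrier_mat m m"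
  shows "app1 n m 1 F X = F X"
proof -
  have "mat n n (\<lambda>(i,j). X $$ (i, j)) = X" by (rule eq_matI) (use assms in auto)
  then show ?thesis using assms by (intro eq_matI) (auto simp: app1_index)
qed

definition sg :: "nat \<Rightarrow> nat \<Rightarrow> nat" where "sg n r = (r mod n)*n + r div n"

lemma sg_lt: "r < n*n \<Longrightarrow> sg n r < n*n"
  unfolding sg_def by (rule dm_lt) (auto simp: mod_lt div_lt)
lemma sg_div[simp]: "r < n*n \<Longrightarrow> sg n r div n = r mod n"
  unfolding sg_def by (simp add: div_lt)
lemma sg_mod[simp]: "r < n*n \<Longrightarrow> sg n r mod n = r div n"
  unfolding sg_def by (simp add: div_lt)

lemma swap_index: "r < n*n \<Longrightarrow> k < n*n \<Longrightarrow> swap_op n $$ (r,k) = (if k = sg n r then 1 else 0)"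
proof -
  assume rk: "r < n*n" "k < n*n"
  have "(r div n = k mod n \<and> r mod n = k div n) \<longleftrightarrow> k = sg n r"
  proof
    assume h: "r div n = k mod n \<and> r mod n = k div n"
    have "k = (k div n)*n + k mod n" by simp
    then show "k = sg n r" using h unfolding sg_def by simp
  next
    assume "k = sg n r" then show "r div n = k mod n \<and> r mod n = k div n" using rk by simp
  qed
  then show ?thesis using rk by (simp add: swap_op_def)
qed

lemma swap_index2: "k < n*n \<Longrightarrow> c < n*n \<Longrightarrow> swap_op n $$ (k,c) = (if k = sg n c then 1 else 0)"
proof -
  assume kc: "k < n*n" "c < n*n"
  have "swap_op n $$ (k,c) = swap_op n $$ (c,k)" using kc by (auto simp: swap_op_def)
  then show ?thesis using kc by (simp add: swap_index)
qed

lemma swap_carrier[simp]: "swap_op n \<in> carrier_mat (n*n) (n*n)"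
  by (simp add: swap_op_def)
lemma swap_dim[simp]: "dim_row (swap_op n) = n*n" "dim_col (swap_op n) = n*n"
  by (auto simp: swap_op_def)

lemma swap_conj: assumes "M \<in> carrier_mat (n*n) (n*n)"
  shows "swap_op n * M * swap_op n = reorder n n M"
proof -
  have L: "swap_op n * M = mat (n*n) (n*n) (\<lambda>(r,c). M $$ (sg n r, c))"
  proof (rule eq_matI)
    fix r c assume "r < dim_row (mat (n*n) (n*n) (\<lambda>(r,c). M $$ (sg n r, c)))" "c < dim_col (mat (n*n) (n*n) (\<lambda>(r,c). M $$ (sg n r, c)))"
    hence rc: "r < n*n" "c < n*n" by auto
    have "(swap_op n * M) $$ (r,c) = (\<Sum>k<n*n. swap_op n $$ (r,k) * M $$ (k,c))"
      using rc assms by (simp add: scalar_prod_def lessThan_atLeast0)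
    also have "\<dots> = (\<Sum>k<n*n. if k = sg n r then M $$ (k,c) else 0)"
      by (rule sum.cong) (auto simp: swap_index rc)
    also have "\<dots> = M $$ (sg n r, c)" using sg_lt[OF rc(1)] by simp
    finally show "(swap_op n * M) $$ (r,c) = mat (n*n) (n*n) (\<lambda>(r,c). M $$ (sg n r, c)) $$ (r,c)" using rc by simp
  qed (use assms in auto)
  show ?thesis
  proof (rule eq_matI)
    fix r c assume "r < dim_row (reorder n n M)" "c < dim_col (reorder n n M)"
    hence rc: "r < n*n" "c < n*n" by (auto simp: reorder_def)
    have "(swap_op n * M * swap_op n) $$ (r,c) = (\<Sum>k<n*n. M $$ (sg n r, k) * swap_op n $$ (k,c))"
      using rc assms by (simp add: L scalar_prod_def lessThan_atLeast0)
    also have "\<dots> = (\<Sum>k<n*n. if k = sg n c then M $$ (sg n r, k) else 0)"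
      by (rule sum.cong) (auto simp: swap_index2 rc)
    also have "\<dots> = M $$ (sg n r, sg n c)" using sg_lt[OF rc(2)] by simp
    finally show "(swap_op n * M * swap_op n) $$ (r,c) = reorder n n M $$ (r,c)" using rc by (simp add: reorder_def sg_def)
  qed (auto simp: reorder_def)
qed

definition F0 :: "nat \<Rightarrow> cmat \<Rightarrow> cmat" where
  "F0 n \<rho> = (1 / of_nat n) \<cdot>\<^sub>m (mtrace \<rho> \<cdot>\<^sub>m swap_op n + kron n n (1\<^sub>m n) (rho_hat n \<rho>)
                          + kron n n (rho_hat n \<rho>) (1\<^sub>m n))"

lemma id_star_form_F0: "id_star_form n X \<rho> = F0 n \<rho> + X \<rho>"
  by (simp add: id_star_form_def F0_def)

lemma F0_carrier[simp]: "F0 n \<rho> \<in> carrier_mat (n*n) (n*n)"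
  by (simp add: F0_def kron_def)
lemma F0_dim[simp]: "dim_row (F0 n \<rho>) = n*n" "dim_col (F0 n \<rho>) = n*n"
  by (auto simp: F0_def kron_def)

lemma mtrace_carrier: "\<rho> \<in> carrier_mat n n \<Longrightarrow> mtrace \<rho> = (\<Sum>i<n. \<rho> $$ (i,i))"
  by (simp add: mtrace_def)

lemma F0_index:
  assumes "\<rho> \<in> carrier_mat n n" "r < n*n" "c < n*n"
  shows "F0 n \<rho> $$ (r,c) = (1 / of_nat n) * (mtrace \<rho> * (if c = sg n r then 1 else 0)
     + (if r div n = c div n then \<rho> $$ (r mod n, c mod n) - (if r mod n = c mod n then mtrace \<rho> / of_nat n else 0) else 0)
     + (if r mod n = c mod n then \<rho> $$ (r div n, c div n) - (if r div n = c div n then mtrace \<rho> / of_nat n else 0) else 0))"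
  using assms by (simp add: F0_def kron_def rho_hat_def swap_index div_lt mod_lt)

lemma F0_index':
  assumes "\<rho> \<in> carrier_mat n n" "r < n*n" "c < n*n"
  shows "F0 n \<rho> $$ (r,c) = (1 / of_nat n) * (mtrace \<rho> * (if r div n = c mod n \<and> r mod n = c div n then 1 else 0)
     + (if r div n = c div n then \<rho> $$ (r mod n, c mod n) - (if r mod n = c mod n then mtrace \<rho> / of_nat n else 0) else 0)
     + (if r mod n = c mod n then \<rho> $$ (r div n, c div n) - (if r div n = c div n then mtrace \<rho> / of_nat n else 0) else 0))"
  using assms by (simp add: F0_def kron_def rho_hat_def swap_op_def div_lt mod_lt)

lemma sum_if_eq: "l < (n::nat) \<Longrightarrow> (\<Sum>i<n. if i = l \<and> P then (x::complex) else 0) = (if P then x else 0)"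
proof (cases P)
  case True
  assume l: "l < n"
  have "(\<Sum>i<n. if i = l \<and> P then (x::complex) else 0) = (\<Sum>i<n. if i = l then x else 0)" using True by simp
  also have "\<dots> = x" using l by simp
  finally show ?thesis using True by simp
qed simp

lemma sum3: "(\<Sum>i\<in>A. (1/x) * (a i + b i + c i)) = (1/(x::complex)) * (sum a A + sum b A + sum c A)"
  by (simp only: sum_distrib_left[symmetric] sum.distrib)

lemma sum_if_eq2: "l < (n::nat) \<Longrightarrow> (\<Sum>i<n. if i = l \<and> j = i then (x::complex) else 0) = (if j = l then x else 0)"
proof -
  assume l: "l < n"
  have "(\<Sum>i<n. if i = l \<and> j = i then (x::complex) else 0) = (\<Sum>i<n. if i = l \<and> j = l then (x::complex) else 0)"
    by (rule sum.cong) auto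
  also have "\<dots> = (if j = l then x else 0)" using sum_if_eq[OF l] by simp
  finally show ?thesis .
qed

lemma ptr1_F0: assumes "\<rho> \<in> carrier_mat n n" "n > 0" shows "ptr1 n n (F0 n \<rho>) = \<rho>"
proof (rule eq_matI)
  fix j l assume "j < dim_row \<rho>" "l < dim_col \<rho>"
  hence jl: "j < n" "l < n" using assms by auto
  define t where "t = mtrace \<rho>"
  have t: "t = (\<Sum>i<n. \<rho> $$ (i,i))" using assms by (simp add: t_def mtrace_carrier)
  have "ptr1 n n (F0 n \<rho>) $$ (j,l) = (\<Sum>i<n. F0 n \<rho> $$ (i*n+j, i*n+l))"
    using jl by (simp add: ptr1_def)
  also have "\<dots> = (\<Sum>i<n. (1/of_nat n) * ((if i = l \<and> j = i then t else 0) + (\<rho> $$ (j,l) - (if j = l then t / of_nat n else 0))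
       + (if j = l then \<rho> $$ (i,i) - t / of_nat n else 0)))"
    by (rule sum.cong) (auto simp: F0_index' assms jl dm_lt t_def)
  also have "\<dots> = (1/of_nat n) * ((\<Sum>i<n. if i = l \<and> j = i then t else 0) + of_nat n * (\<rho> $$ (j,l) - (if j = l then t / of_nat n else 0))
       + (if j = l then (\<Sum>i<n. \<rho> $$ (i,i)) - of_nat n * (t / of_nat n) else 0))"
    unfolding sum3 by (simp add: sum_subtractf)
  also have "\<dots> = \<rho> $$ (j,l)"
    using assms(2) jl by (simp add: sum_if_eq2 t[symmetric] field_simps)
  finally show "ptr1 n n (F0 n \<rho>) $$ (j,l) = \<rho> $$ (j,l)" .
qed (use assms in \<open>auto simp: ptr1_def\<close>)

lemma ptr2_F0: assumes "\<rho> \<in> carrier_mat n n" "n > 0" shows "ptr2 n n (F0 n \<rho>) = \<rho>"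
proof (rule eq_matI)
  fix j l assume "j < dim_row \<rho>" "l < dim_col \<rho>"
  hence jl: "j < n" "l < n" using assms by auto
  define t where "t = mtrace \<rho>"
  have t: "t = (\<Sum>i<n. \<rho> $$ (i,i))" using assms by (simp add: t_def mtrace_carrier)
  have "ptr2 n n (F0 n \<rho>) $$ (j,l) = (\<Sum>i<n. F0 n \<rho> $$ (j*n+i, l*n+i))"
    using jl by (simp add: ptr2_def)
  also have "\<dots> = (\<Sum>i<n. (1/of_nat n) * ((if i = l \<and> j = i then t else 0) 
       + (if j = l then \<rho> $$ (i,i) - t / of_nat n else 0) + (\<rho> $$ (j,l) - (if j = l then t / of_nat n else 0))))"
    by (rule sum.cong) (auto simp: F0_index' assms jl dm_lt t_def)
  also have "\<dots> = (1/of_nat n) * ((\<Sum>i<n. if i = l \<and> j = i then t else 0) 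
       + (if j = l then (\<Sum>i<n. \<rho> $$ (i,i)) - of_nat n * (t / of_nat n) else 0) + of_nat n * (\<rho> $$ (j,l) - (if j = l then t / of_nat n else 0)))"
    unfolding sum3 by (simp add: sum_subtractf)
  also have "\<dots> = \<rho> $$ (j,l)"
    using assms(2) jl by (simp add: sum_if_eq2 t[symmetric] field_simps)
  finally show "ptr2 n n (F0 n \<rho>) $$ (j,l) = \<rho> $$ (j,l)" .
qed (use assms in \<open>auto simp: ptr2_def\<close>)

lemma reorder_F0: assumes "\<rho> \<in> carrier_mat n n" shows "reorder n n (F0 n \<rho>) = F0 n \<rho>"
proof (rule eq_matI)
  fix r c assume "r < dim_row (F0 n \<rho>)" "c < dim_col (F0 n \<rho>)"
  hence rc: "r < n*n" "c < n*n" by auto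
  have "reorder n n (F0 n \<rho>) $$ (r,c) = F0 n \<rho> $$ (sg n r, sg n c)"
    using rc by (simp add: reorder_def sg_def)
  also have "\<dots> = F0 n \<rho> $$ (r,c)"
    using rc sg_lt[OF rc(1)] sg_lt[OF rc(2)] by (simp only: F0_index'[OF assms] sg_div sg_mod) (simp add: add_ac conj_commute)
  finally show "reorder n n (F0 n \<rho>) $$ (r,c) = F0 n \<rho> $$ (r,c)" .
qed (auto simp: reorder_def)

lemma mtrace_add: assumes "X \<in> carrier_mat n n" "Y \<in> carrier_mat n n" shows "mtrace (X + Y) = mtrace X + mtrace Y"
proof -
  have "mtrace (X+Y) = (\<Sum>i<n. (X+Y)$$(i,i))" using assms by (simp add: mtrace_def)
  also have "\<dots> = (\<Sum>i<n. X$$(i,i) + Y$$(i,i))" by (rule sum.cong) (use assms in auto)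
  finally show ?thesis using assms by (simp add: sum.distrib mtrace_carrier)
qed
lemma mtrace_smult: assumes "X \<in> carrier_mat n n" shows "mtrace (a \<cdot>\<^sub>m X) = a * mtrace X"
proof -
  have "mtrace (a \<cdot>\<^sub>m X) = (\<Sum>i<n. (a \<cdot>\<^sub>m X)$$(i,i))" using assms by (simp add: mtrace_def)
  also have "\<dots> = (\<Sum>i<n. a * X$$(i,i))" by (rule sum.cong) (use assms in auto)
  finally show ?thesis using assms by (simp add: sum_distrib_left mtrace_carrier)
qed

lemma F0_lin_aux: "(1/N)*((tx+ty)*A + (if P then (x1+y1) - (if Q then (tx+ty)/N else 0) else 0) + (if Q then (x2+y2) - (if P then (tx+ty)/N else 0) else 0))
  = (1/N)*(tx*A + (if P then x1 - (if Q then tx/N else 0) else 0) + (if Q then x2 - (if P then tx/N else 0) else 0))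
  + (1/N)*(ty*A + (if P then y1 - (if Q then ty/N else 0) else 0) + (if Q then y2 - (if P then ty/N else 0) else 0))"
  for N tx ty A x1 y1 x2 y2 :: complex
  by (cases P; cases Q) (simp_all add: algebra_simps add_divide_distrib diff_divide_distrib)

lemma F0_smult_aux: "(1/N)*((a*tx)*A + (if P then (a*x1) - (if Q then (a*tx)/N else 0) else 0) + (if Q then (a*x2) - (if P then (a*tx)/N else 0) else 0))
  = a * ((1/N)*(tx*A + (if P then x1 - (if Q then tx/N else 0) else 0) + (if Q then x2 - (if P then tx/N else 0) else 0)))"
  for N tx a A x1 x2 :: complex
  by (cases P; cases Q) (simp_all add: algebra_simps)

lemma F0_add: assumes "X \<in> carrier_mat n n" "Y \<in> carrier_mat n n"
  shows "F0 n (X + Y) = F0 n X + F0 n Y"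
proof (rule eq_matI)
  fix r c assume "r < dim_row (F0 n X + F0 n Y)" "c < dim_col (F0 n X + F0 n Y)"
  hence rc: "r < n*n" "c < n*n" by auto
  have d: "r div n < n" "c div n < n" "r mod n < n" "c mod n < n" using rc by (auto simp: div_lt mod_lt)
  have XY: "X + Y \<in> carrier_mat n n" using assms by simp
  show "F0 n (X + Y) $$ (r,c) = (F0 n X + F0 n Y) $$ (r,c)"
    apply (subst index_add_mat) using rc apply simp_all
    apply (simp only: F0_index'[OF XY rc] F0_index'[OF assms(1) rc] F0_index'[OF assms(2) rc] mtrace_add[OF assms])
    using d assms by (simp only: index_add_mat carrier_matD F0_lin_aux)
qed auto

lemma F0_smult: assumes "X \<in> carrier_mat n n"
  shows "F0 n (a \<cdot>\<^sub>m X) = a \<cdot>\<^sub>m F0 n X"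
proof (rule eq_matI)
  fix r c assume "r < dim_row (a \<cdot>\<^sub>m F0 n X)" "c < dim_col (a \<cdot>\<^sub>m F0 n X)"
  hence rc: "r < n*n" "c < n*n" by auto
  have d: "r div n < n" "c div n < n" "r mod n < n" "c mod n < n" using rc by (auto simp: div_lt mod_lt)
  have XY: "a \<cdot>\<^sub>m X \<in> carrier_mat n n" using assms by simp
  show "F0 n (a \<cdot>\<^sub>m X) $$ (r,c) = (a \<cdot>\<^sub>m F0 n X) $$ (r,c)"
    apply (subst index_smult_mat) using rc apply simp_all
    apply (simp only: F0_index'[OF XY rc] F0_index'[OF assms(1) rc] mtrace_smult[OF assms])
    using d assms by (simp only: index_smult_mat carrier_matD F0_smult_aux)
qed auto

lemma F0_linear: "linear_on n (n*n) (F0 n)"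
  unfolding linear_on_def by (auto simp: F0_add F0_smult)

lemma F0_pi: assumes "n > 0" shows "F0 n ((1 / of_nat n) \<cdot>\<^sub>m 1\<^sub>m n) = (1 / of_nat n) \<cdot>\<^sub>m swap_op n"
proof (rule eq_matI)
  have tr: "mtrace ((1 / of_nat n) \<cdot>\<^sub>m 1\<^sub>m n) = 1" using assms by (simp add: mtrace_smult[of "1\<^sub>m n" n] mtrace_def)
  fix r c assume "r < dim_row ((1 / of_nat n) \<cdot>\<^sub>m swap_op n)" "c < dim_col ((1 / of_nat n) \<cdot>\<^sub>m swap_op n)"
  hence rc: "r < n*n" "c < n*n" by auto
  have d: "r div n < n" "c div n < n" "r mod n < n" "c mod n < n" using rc by (auto simp: div_lt mod_lt)
  show "F0 n ((1 / of_nat n) \<cdot>\<^sub>m 1\<^sub>m n) $$ (r,c) = ((1 / of_nat n) \<cdot>\<^sub>m swap_op n) $$ (r,c)"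
  proof -
    have pc: "(1 / of_nat n) \<cdot>\<^sub>m 1\<^sub>m n \<in> carrier_mat n n" by simp
    have pi: "\<And>a b. a < n \<Longrightarrow> b < n \<Longrightarrow> ((1 / of_nat n) \<cdot>\<^sub>m 1\<^sub>m n) $$ (a,b) = (if a = b then 1 / of_nat n else 0)"
      by simp
    show ?thesis
      apply (simp only: F0_index'[OF pc rc] tr pi[OF d(3) d(4)] pi[OF d(1) d(2)])
      using rc by (simp add: swap_op_def)
  qed
qed auto

lemma hermitian_D: assumes "hermitian n X" shows "X \<in> carrier_mat n n" "\<And>i j. i < n \<Longrightarrow> j < n \<Longrightarrow> cnj (X $$ (i,j)) = X $$ (j,i)"
proof -
  show "X \<in> carrier_mat n n" using assms unfolding hermitian_def by (rule conjunct1)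
  have h: "\<forall>i<n. \<forall>j<n. X $$ (j,i) = cnj (X $$ (i,j))" using assms unfolding hermitian_def by (rule conjunct2)
  fix i j assume "i < n" "j < n"
  then have "X $$ (j,i) = cnj (X $$ (i,j))" using h by blast
  then show "cnj (X $$ (i,j)) = X $$ (j,i)" by (rule sym)
qed

lemma hermitian_trace_real: assumes "hermitian n X" shows "cnj (mtrace X) = mtrace X"
proof -
  note X = hermitian_D[OF assms]
  have "cnj (mtrace X) = (\<Sum>i<n. cnj (X $$ (i,i)))" using X by (simp add: mtrace_carrier)
  also have "\<dots> = (\<Sum>i<n. X $$ (i,i))"
  proof (rule sum.cong)
    fix i assume "i \<in> {..<n}" then have "i < n" by simp
    then show "cnj (X $$ (i,i)) = X $$ (i,i)" by (rule X(2)[OF _ \<open>i < n\<close>])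
  qed simp
  finally show ?thesis using X by (simp add: mtrace_carrier)
qed

lemma F0_hermitian: assumes "hermitian n X" shows "hermitian (n*n) (F0 n X)"
proof -
  note X = hermitian_D[OF assms]
  have t: "cnj (mtrace X) = mtrace X" by (rule hermitian_trace_real[OF assms])
  show ?thesis unfolding hermitian_def
  proof (intro conjI allI impI)
    fix i j assume ij: "i < n*n" "j < n*n"
    have d: "i div n < n" "j div n < n" "i mod n < n" "j mod n < n" using ij by (auto simp: div_lt mod_lt)
    show "F0 n X $$ (j,i) = cnj (F0 n X $$ (i,j))"
      apply (simp only: F0_index'[OF X(1) ij(2) ij(1)] F0_index'[OF X(1) ij(1) ij(2)] complex_cnj_mult complex_cnj_add
         complex_cnj_diff complex_cnj_divide complex_cnj_one complex_cnj_zero complex_cnj_of_nat if_distrib[of cnj] t X(2)[OF d(1) d(2)] X(2)[OF d(3) d(4)])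
      by (simp add: eq_commute[of "i div n"] eq_commute[of "i mod n"] conj_commute)
  qed simp
qed

lemma qf_restrict:
  assumes S: "S \<subseteq> {..<n}"
    and z: "\<And>i j. i < n \<Longrightarrow> j < n \<Longrightarrow> i \<notin> S \<or> j \<notin> S \<Longrightarrow> cnj (v i) * X $$ (i,j) * v j = 0"
  shows "qf n X v = (\<Sum>i\<in>S. \<Sum>j\<in>S. cnj (v i) * X $$ (i,j) * v j)"
proof -
  have fS: "finite S" using S finite_subset by blast
  have "qf n X v = (\<Sum>i<n. \<Sum>j\<in>S. cnj (v i) * X $$ (i,j) * v j)"
    unfolding qf_def
  proof (rule sum.cong[OF refl])
    fix i assume i: "i \<in> {..<n}"
    show "(\<Sum>j<n. cnj (v i) * X $$ (i,j) * v j) = (\<Sum>j\<in>S. cnj (v i) * X $$ (i,j) * v j)"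
      by (rule sum.mono_neutral_right) (use S i z in auto)
  qed
  also have "\<dots> = (\<Sum>i\<in>S. \<Sum>j\<in>S. cnj (v i) * X $$ (i,j) * v j)"
  proof (rule sum.mono_neutral_right)
    show "\<forall>i\<in>{..<n} - S. (\<Sum>j\<in>S. cnj (v i) * X $$ (i,j) * v j) = 0"
    proof
      fix i assume i: "i \<in> {..<n} - S"
      show "(\<Sum>j\<in>S. cnj (v i) * X $$ (i,j) * v j) = 0"
        by (rule sum.neutral) (use S i z in auto)
    qed
  qed (use S in auto)
  finally show ?thesis .
qed

lemma psd_diag: assumes "psd n X" "a < n" shows "Im (X $$ (a,a)) = 0" "Re (X $$ (a,a)) \<ge> 0"
proof -
  define v where "v = (\<lambda>i. if i = a then (1::complex) else 0)"
  have "qf n X v = (\<Sum>i\<in>{a}. \<Sum>j\<in>{a}. cnj (v i) * X $$ (i,j) * v j)"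
    by (rule qf_restrict) (auto simp: v_def assms(2))
  hence q: "qf n X v = X $$ (a,a)" by (simp add: v_def)
  show "Im (X $$ (a,a)) = 0" "Re (X $$ (a,a)) \<ge> 0" using assms(1) q unfolding psd_iff by metis+
qed

lemma qf_two: assumes "a < n" "b < n" "a \<noteq> b" "\<And>i. i \<noteq> a \<Longrightarrow> i \<noteq> b \<Longrightarrow> v i = 0"
  shows "qf n X v = cnj (v a) * X $$ (a,a) * v a + cnj (v a) * X $$ (a,b) * v b + cnj (v b) * X $$ (b,a) * v a + cnj (v b) * X $$ (b,b) * v b"
proof -
  have "qf n X v = (\<Sum>i\<in>{a,b}. \<Sum>j\<in>{a,b}. cnj (v i) * X $$ (i,j) * v j)"
    by (rule qf_restrict) (use assms in auto)
  then show ?thesis using assms(3) by (simp add: algebra_simps)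
qed

lemma psd_hermitian: assumes "psd n X" shows "hermitian n X"
  unfolding hermitian_def
proof (intro conjI allI impI)
  show X: "X \<in> carrier_mat n n" using assms psd_iff by blast
  fix i j assume ij: "i < n" "j < n"
  show "X $$ (j,i) = cnj (X $$ (i,j))"
  proof (cases "i = j")
    case True
    then show ?thesis using psd_diag[OF assms ij(1)] by (simp add: complex_eq_iff)
  next
    case False
    define v1 where "v1 = (\<lambda>k. if k = i \<or> k = j then (1::complex) else 0)"
    define v2 where "v2 = (\<lambda>k. if k = i then (1::complex) else if k = j then \<i> else 0)"
    have q1: "qf n X v1 = X $$ (i,i) + X $$ (i,j) + X $$ (j,i) + X $$ (j,j)"
      by (subst qf_two[OF ij False]) (auto simp: v1_def)
    have q2: "qf n X v2 = X $$ (i,i) + \<i> * X $$ (i,j) - \<i> * X $$ (j,i) + X $$ (j,j)"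
      by (subst qf_two[OF ij False]) (use False in \<open>auto simp: v2_def algebra_simps\<close>)
    have i1: "Im (qf n X v1) = 0" "Im (qf n X v2) = 0" using assms psd_iff by blast+
    have d: "Im (X $$ (i,i)) = 0" "Im (X $$ (j,j)) = 0" using psd_diag[OF assms] ij by auto
    have "Im (X $$ (i,j)) + Im (X $$ (j,i)) = 0" using i1(1) d unfolding q1 by simp
    moreover have "Re (X $$ (i,j)) - Re (X $$ (j,i)) = 0" using i1(2) d unfolding q2 by simp
    ultimately show ?thesis by (simp add: complex_eq_iff)
  qed
qed

definition hb :: "nat \<Rightarrow> cmat \<Rightarrow> real" where
  "hb n Y = (\<Sum>i<n. \<Sum>j<n. cmod (Y $$ (i,j)))"

lemma hb_nonneg: "hb n Y \<ge> 0"
  unfolding hb_def by (intro sum_nonneg) auto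

lemma qf_shift: assumes "Y \<in> carrier_mat n n"
  shows "qf n (Y + c \<cdot>\<^sub>m 1\<^sub>m n) v = qf n Y v + c * (\<Sum>i<n. cnj (v i) * v i)"
proof -
  have "qf n (Y + c \<cdot>\<^sub>m 1\<^sub>m n) v = (\<Sum>i<n. \<Sum>j<n. cnj (v i) * Y $$ (i,j) * v j + (if j = i then c * (cnj (v i) * v i) else 0))"
    unfolding qf_def using assms by (intro sum.cong refl) (auto simp: algebra_simps)
  also have "\<dots> = qf n Y v + (\<Sum>i<n. c * (cnj (v i) * v i))"
    by (simp add: sum.distrib qf_def)
  finally show ?thesis by (simp add: sum_distrib_left)
qed

lemma qf_herm_real: assumes "hermitian n Y" shows "cnj (qf n Y v) = qf n Y v"
proof -
  note H = hermitian_D[OF assms]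
  have "cnj (qf n Y v) = (\<Sum>i<n. \<Sum>j<n. v i * cnj (Y $$ (i,j)) * cnj (v j))"
    by (simp add: qf_def)
  also have "\<dots> = (\<Sum>i<n. \<Sum>j<n. cnj (v j) * Y $$ (j,i) * v i)"
  proof (intro sum.cong refl)
    fix i j assume "i \<in> {..<n}" "j \<in> {..<n}"
    then have "cnj (Y $$ (i,j)) = Y $$ (j,i)" using H(2) by simp
    then show "v i * cnj (Y $$ (i,j)) * cnj (v j) = cnj (v j) * Y $$ (j,i) * v i" by simp
  qed
  also have "\<dots> = qf n Y v" unfolding qf_def by (rule sum.swap)
  finally show ?thesis .
qed

lemma prod_le_N: fixes n :: nat assumes "i < n" "j < n"
  shows "cmod (v i) * cmod (v j) \<le> (\<Sum>k<n. (cmod (v k))^2)"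
proof -
  have a: "(cmod (v i))^2 \<le> (\<Sum>k<n. (cmod (v k))^2)"
    by (rule member_le_sum[of i "{..<n}" "\<lambda>k. (cmod (v k))^2"]) (use assms in auto)
  have b: "(cmod (v j))^2 \<le> (\<Sum>k<n. (cmod (v k))^2)"
    by (rule member_le_sum[of j "{..<n}" "\<lambda>k. (cmod (v k))^2"]) (use assms in auto)
  have "cmod (v i) * cmod (v j) \<le> ((cmod (v i))^2 + (cmod (v j))^2) / 2"
    using sum_squares_bound[of "cmod (v i)" "cmod (v j)"] by (simp add: power2_eq_square field_simps)
  moreover have "((cmod (v i))^2 + (cmod (v j))^2) / 2 \<le> (\<Sum>k<n. (cmod (v k))^2)"
    using a b by (simp add: field_simps)
  ultimately show ?thesis by (rule order_trans)
qed

lemma herm_shift_psd: assumes "hermitian n Y"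
  shows "psd n (Y + complex_of_real (hb n Y) \<cdot>\<^sub>m 1\<^sub>m n)"
  unfolding psd_iff
proof (intro conjI allI)
  note H = hermitian_D[OF assms]
  show "Y + complex_of_real (hb n Y) \<cdot>\<^sub>m 1\<^sub>m n \<in> carrier_mat n n" using H by simp
  fix v
  define N where "N = (\<Sum>k<n. (cmod (v k))^2)"
  have cv: "(\<Sum>i<n. cnj (v i) * v i) = complex_of_real N"
    unfolding N_def of_real_sum by (intro sum.cong refl) (simp add: complex_eq_iff, metis cmod_power2 power2_eq_square)
  have q: "qf n (Y + complex_of_real (hb n Y) \<cdot>\<^sub>m 1\<^sub>m n) v = qf n Y v + complex_of_real (hb n Y * N)"
    using qf_shift[OF H(1)] cv by simp
  have im: "Im (qf n Y v) = 0" using qf_herm_real[OF assms, of v] by (metis Im_complex_of_real Reals_cnj_iff complex_is_Real_iff)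
  have "cmod (qf n Y v) \<le> (\<Sum>i<n. \<Sum>j<n. cmod (cnj (v i) * Y $$ (i,j) * v j))"
    unfolding qf_def by (rule order_trans[OF norm_sum sum_mono[OF norm_sum]])
  also have "\<dots> \<le> (\<Sum>i<n. \<Sum>j<n. cmod (Y $$ (i,j)) * N)"
  proof (intro sum_mono)
    fix i j assume "i \<in> {..<n}" "j \<in> {..<n}"
    then have "cmod (v i) * cmod (v j) \<le> N" unfolding N_def by (intro prod_le_N) auto
    then have "cmod (Y $$ (i,j)) * (cmod (v i) * cmod (v j)) \<le> cmod (Y $$ (i,j)) * N"
      by (intro mult_left_mono) auto
    then show "cmod (cnj (v i) * Y $$ (i,j) * v j) \<le> cmod (Y $$ (i,j)) * N"
      by (simp add: norm_mult algebra_simps)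
  qed
  also have "\<dots> = hb n Y * N" unfolding hb_def by (simp add: sum_distrib_right)
  finally have b: "cmod (qf n Y v) \<le> hb n Y * N" .
  have "- Re (qf n Y v) \<le> cmod (qf n Y v)" using abs_Re_le_cmod[of "qf n Y v"] by linarith
  then show "Im (qf n (Y + complex_of_real (hb n Y) \<cdot>\<^sub>m 1\<^sub>m n) v) = 0"
     "0 \<le> Re (qf n (Y + complex_of_real (hb n Y) \<cdot>\<^sub>m 1\<^sub>m n) v)"
    using b im unfolding q by auto
qed

lemma psd_one: "psd n (1\<^sub>m n)"
proof -
  have e: "0\<^sub>m n n + complex_of_real 1 \<cdot>\<^sub>m 1\<^sub>m n = 1\<^sub>m n" by (rule eq_matI) auto
  have "hb n (0\<^sub>m n n) = 0" unfolding hb_def by (intro sum.neutral) auto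
  moreover have "hermitian n (0\<^sub>m n n)" unfolding hermitian_def by auto
  ultimately have "psd n (0\<^sub>m n n + complex_of_real 0 \<cdot>\<^sub>m 1\<^sub>m n)" using herm_shift_psd by metis
  have "psd n (0\<^sub>m n n + complex_of_real 1 \<cdot>\<^sub>m 1\<^sub>m n)"
    unfolding psd_iff
  proof (intro conjI allI)
    fix v
    have "qf n (0\<^sub>m n n + complex_of_real 1 \<cdot>\<^sub>m 1\<^sub>m n) v = qf n (0\<^sub>m n n) v + complex_of_real 1 * (\<Sum>i<n. cnj (v i) * v i)"
      by (rule qf_shift) simp
    also have "\<dots> = complex_of_real (\<Sum>k<n. (cmod (v k))^2)"
      unfolding of_real_sum by (auto simp: qf_def intro!: sum.cong) (simp add: complex_eq_iff, metis cmod_power2 power2_eq_square)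
    finally have q: "qf n (0\<^sub>m n n + complex_of_real 1 \<cdot>\<^sub>m 1\<^sub>m n) v = complex_of_real (\<Sum>k<n. (cmod (v k))^2)" .
    show "Im (qf n (0\<^sub>m n n + complex_of_real 1 \<cdot>\<^sub>m 1\<^sub>m n) v) = 0" unfolding q by simp
    show "0 \<le> Re (qf n (0\<^sub>m n n + complex_of_real 1 \<cdot>\<^sub>m 1\<^sub>m n) v)" unfolding q by (simp add: sum_nonneg)
  qed simp
  then show ?thesis using e by simp
qed

lemma app2_hermitian:
  assumes L: "linear_on n m E" and CP: "completely_positive n m E" and k: "k > 0" and H: "hermitian (k*n) X"
  shows "hermitian (k*m) (app2 k n m E X)"
proof -
  define c where "c = complex_of_real (hb (k*n) X)"
  note HX = hermitian_D[OF H]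
  have P: "psd (k*n) (X + c \<cdot>\<^sub>m 1\<^sub>m (k*n))" unfolding c_def by (rule herm_shift_psd[OF H])
  have AP: "hermitian (k*m) (app2 k n m E (X + c \<cdot>\<^sub>m 1\<^sub>m (k*n)))"
    using CP P k unfolding completely_positive_def by (blast intro: psd_hermitian)
  have A1: "hermitian (k*m) (app2 k n m E (1\<^sub>m (k*n)))"
    using CP psd_one k unfolding completely_positive_def by (blast intro: psd_hermitian)
  have eq: "app2 k n m E (X + c \<cdot>\<^sub>m 1\<^sub>m (k*n)) = app2 k n m E X + c \<cdot>\<^sub>m app2 k n m E (1\<^sub>m (k*n))"
    using HX(1) by (simp add: app2_add[OF L] app2_smult[OF L])
  have cr: "cnj c = c" unfolding c_def by simp
  note HP = hermitian_D[OF AP] and H1 = hermitian_D[OF A1]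
  show ?thesis unfolding hermitian_def
  proof (intro conjI allI impI)
    fix i j assume ij: "i < k*m" "j < k*m"
    have e1: "\<And>a b. a < k*m \<Longrightarrow> b < k*m \<Longrightarrow> app2 k n m E X $$ (a,b) = app2 k n m E (X + c \<cdot>\<^sub>m 1\<^sub>m (k*n)) $$ (a,b) - c * app2 k n m E (1\<^sub>m (k*n)) $$ (a,b)"
      unfolding eq by simp
    show "app2 k n m E X $$ (j,i) = cnj (app2 k n m E X $$ (i,j))"
      using ij by (simp add: e1 HP(2) H1(2) cr)
  qed simp
qed

lemma psd_carrier: "psd n X \<Longrightarrow> X \<in> carrier_mat n n"
  unfolding psd_def by blast
lemma density_carrier: "density n X \<Longrightarrow> X \<in> carrier_mat n n"
  unfolding density_def by (blast dest: psd_carrier)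

lemma qf_smult: "X \<in> carrier_mat n n \<Longrightarrow> qf n (a \<cdot>\<^sub>m X) v = a * qf n X v"
  unfolding qf_def by (auto simp: sum_distrib_left algebra_simps intro!: sum.cong)

lemma psd_smult: assumes "psd n X" "r \<ge> 0" shows "psd n (complex_of_real r \<cdot>\<^sub>m X)"
  using assms unfolding psd_iff by (auto simp: qf_smult)

lemma density_pi: assumes "n > 0" shows "density n ((1 / of_nat n) \<cdot>\<^sub>m 1\<^sub>m n)"
proof -
  have e: "(1 / of_nat n :: complex) = complex_of_real (1 / real n)" by simp
  have "psd n (complex_of_real (1 / real n) \<cdot>\<^sub>m 1\<^sub>m n)" by (rule psd_smult[OF psd_one]) simp
  moreover have "mtrace ((1 / of_nat n) \<cdot>\<^sub>m 1\<^sub>m n) = 1" using assms by (simp add: mtrace_smult[of "1\<^sub>m n" n] mtrace_def)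
  ultimately show ?thesis unfolding density_def e by simp
qed

lemma channel_id: "channel n n id"
  unfolding channel_def linear_on_def completely_positive_def
  by (auto simp: app2_id psd_carrier)

lemma channel_comp: assumes E: "channel n m E" and F: "channel m l F" shows "channel n l (F \<circ> E)"
proof -
  have LE: "linear_on n m E" and LF: "linear_on m l F" using E F unfolding channel_def by auto
  have cE: "\<forall>Y\<in>carrier_mat n n. E Y \<in> carrier_mat m m" using LE unfolding linear_on_def by auto
  have lin: "linear_on n l (F \<circ> E)" using LE LF unfolding linear_on_def by auto
  have cp: "completely_positive n l (F \<circ> E)"
    unfolding completely_positive_def
  proof (intro allI impI)
    fix k X assume "k > 0" "psd (k*n) X"
    then have "psd (k*m) (app2 k n m E X)" using E unfolding channel_def completely_positive_def by auto
    then have "psd (k*l) (app2 k m l F (app2 k n m E X))" using F \<open>k > 0\<close> unfolding channel_def completely_positive_def by auto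
    then show "psd (k*l) (app2 k n l (F \<circ> E) X)" by (simp add: app2_comp[OF cE])
  qed
  have tr: "\<forall>X\<in>carrier_mat n n. mtrace ((F \<circ> E) X) = mtrace X"
    using E F cE unfolding channel_def by auto
  show ?thesis unfolding channel_def using lin cp tr by blast
qed

lemma ptr1_add: "A \<in> carrier_mat (n*m) (n*m) \<Longrightarrow> B \<in> carrier_mat (n*m) (n*m) \<Longrightarrow> ptr1 n m (A + B) = ptr1 n m A + ptr1 n m B"
  by (rule eq_matI) (auto simp: ptr1_def sum.distrib dm_lt)
lemma ptr2_add: "A \<in> carrier_mat (n*m) (n*m) \<Longrightarrow> B \<in> carrier_mat (n*m) (n*m) \<Longrightarrow> ptr2 n m (A + B) = ptr2 n m A + ptr2 n m B"
  by (rule eq_matI) (auto simp: ptr2_def sum.distrib dm_lt)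
lemma reorder_add: assumes "A \<in> carrier_mat (n*m) (n*m)" "B \<in> carrier_mat (n*m) (n*m)"
  shows "reorder n m (A + B) = reorder n m A + reorder n m B"
proof (rule eq_matI)
  fix r c assume "r < dim_row (reorder n m A + reorder n m B)" "c < dim_col (reorder n m A + reorder n m B)"
  hence rc: "r < m*n" "c < m*n" by (auto simp: reorder_def)
  have "(r mod n)*m + r div n < n*m" "(c mod n)*m + c div n < n*m"
    using rc by (auto intro!: dm_lt simp: mod_lt div_lt)
  then show "reorder n m (A + B) $$ (r,c) = (reorder n m A + reorder n m B) $$ (r,c)"
    using rc assms by (simp add: reorder_def)
qed (auto simp: reorder_def)

lemma mat_add4: "(a::cmat) \<in> carrier_mat k k \<Longrightarrow> b \<in> carrier_mat k k \<Longrightarrow> c \<in> carrier_mat k k \<Longrightarrow> d \<in> carrier_mat k k \<Longrightarrow>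
  (a + c) + (b + d) = (a + b) + (c + d)"
  by (rule eq_matI) (auto simp: ac_simps)

lemma linear_on_add: assumes A: "linear_on n k A" and B: "linear_on n k B" shows "linear_on n k (\<lambda>Y. A Y + B Y)"
proof -
  have cA: "\<And>X. X \<in> carrier_mat n n \<Longrightarrow> A X \<in> carrier_mat k k" and cB: "\<And>X. X \<in> carrier_mat n n \<Longrightarrow> B X \<in> carrier_mat k k"
    using A B unfolding linear_on_def by auto
  have aA: "\<And>X Y. X \<in> carrier_mat n n \<Longrightarrow> Y \<in> carrier_mat n n \<Longrightarrow> A (X + Y) = A X + A Y"
    and aB: "\<And>X Y. X \<in> carrier_mat n n \<Longrightarrow> Y \<in> carrier_mat n n \<Longrightarrow> B (X + Y) = B X + B Y"
    using A B unfolding linear_on_def by auto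
  have sA: "\<And>X c. X \<in> carrier_mat n n \<Longrightarrow> A (c \<cdot>\<^sub>m X) = c \<cdot>\<^sub>m A X"
    and sB: "\<And>X c. X \<in> carrier_mat n n \<Longrightarrow> B (c \<cdot>\<^sub>m X) = c \<cdot>\<^sub>m B X"
    using A B unfolding linear_on_def by auto
  show ?thesis unfolding linear_on_def
  proof (intro conjI ballI allI)
    fix X :: cmat assume "X \<in> carrier_mat n n" then show "A X + B X \<in> carrier_mat k k" using cA cB by simp
  next
    fix X Y :: cmat assume X: "X \<in> carrier_mat n n" and Y: "Y \<in> carrier_mat n n"
    show "A (X + Y) + B (X + Y) = A X + B X + (A Y + B Y)"
      using aA[OF X Y] aB[OF X Y] mat_add4[OF cA[OF X] cB[OF X] cA[OF Y] cB[OF Y]] by simp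
  next
    fix X :: cmat and c assume X: "X \<in> carrier_mat n n"
    show "A (c \<cdot>\<^sub>m X) + B (c \<cdot>\<^sub>m X) = c \<cdot>\<^sub>m (A X + B X)"
      using sA[OF X] sB[OF X] add_smult_distrib_left_mat[OF cA[OF X] cB[OF X]] by simp
  qed
qed

lemma linear_on_app2: "linear_on n k A \<Longrightarrow> linear_on n' m E \<Longrightarrow> k = n*n' \<Longrightarrow> linear_on n (n*m) (\<lambda>Y. app2 n n' m E (A Y))"
  unfolding linear_on_def by (auto simp: app2_add[unfolded linear_on_def] app2_smult[unfolded linear_on_def])

lemma qsst_carrier: assumes "qsst star n e X" "state_over_time_function star" "n > 0" "e > 0"
  shows "X \<in> carrier_mat (n*e) (n*e)"
  using assms unfolding qsst_def state_over_time_function_def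
  by (auto dest: density_carrier simp: reorder_def)

lemma backward:
  assumes S: "state_over_time_function star" and XB: "Xi_basic Xi" and ind: "induced_by star Xi"
  shows "axiom_EP star" "axiom_Jhat star"
proof -
  have XL: "\<And>n. n > 0 \<Longrightarrow> linear_on n (n*n) (Xi n)" using XB unfolding Xi_basic_def by blast
  have X1: "\<And>n. n > 0 \<Longrightarrow> Xi n (1\<^sub>m n) = 0\<^sub>m (n*n) (n*n)" using XB unfolding Xi_basic_def by blast
  have Xp1: "\<And>n X. n > 0 \<Longrightarrow> X \<in> carrier_mat n n \<Longrightarrow> ptr1 n n (Xi n X) = 0\<^sub>m n n" using XB unfolding Xi_basic_def by blast
  have ind1: "\<And>n \<rho>. n > 0 \<Longrightarrow> density n \<rho> \<Longrightarrow> star n n id \<rho> = F0 n \<rho> + Xi n \<rho>"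
    using ind unfolding induced_by_def by (simp add: id_star_form_F0)
  have ind2: "\<And>n m E \<rho>. n > 0 \<Longrightarrow> m > 0 \<Longrightarrow> channel n m E \<Longrightarrow> density n \<rho> \<Longrightarrow> star n m E \<rho> = app2 n n m E (star n n id \<rho>)"
    using ind unfolding induced_by_def by blast
  define Phi where "Phi n m E = (\<lambda>Y. app2 n n m E (F0 n Y + Xi n Y))" for n m E
  define ext where "ext n m e E X = app1 n (n*m) e (Phi n m E) X" for n m e E X
  have XC: "\<And>n X. n > 0 \<Longrightarrow> X \<in> carrier_mat n n \<Longrightarrow> Xi n X \<in> carrier_mat (n*n) (n*n)"
    using XL unfolding linear_on_def by blast
  have PhiL: "\<And>n m E. n > 0 \<Longrightarrow> linear_on n m E \<Longrightarrow> linear_on n (n*m) (Phi n m E)"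
    unfolding Phi_def by (rule linear_on_app2[OF linear_on_add[OF F0_linear XL]]) auto
  have Phip: "\<And>n m E (Y::cmat). n > 0 \<Longrightarrow> linear_on n m E \<Longrightarrow> Y \<in> carrier_mat n n \<Longrightarrow> ptr1 n m (Phi n m E Y) = E Y"
  proof -
    fix n m E and Y :: cmat assume n: "n > 0" and LE: "linear_on n m E" and Y: "Y \<in> carrier_mat n n"
    have "ptr1 n n (F0 n Y + Xi n Y) = Y + 0\<^sub>m n n"
      using ptr1_add[OF F0_carrier XC[OF n Y]] ptr1_F0[OF Y n] Xp1[OF n Y] by simp
    also have "\<dots> = Y" using Y by simp
    finally show "ptr1 n m (Phi n m E Y) = E Y"
      unfolding Phi_def using ptr1_app2[OF LE, of "F0 n Y + Xi n Y" n] XC[OF n Y] by simp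
  qed
  have starPhi: "\<And>n m E \<rho>. n > 0 \<Longrightarrow> m > 0 \<Longrightarrow> channel n m E \<Longrightarrow> density n \<rho> \<Longrightarrow> star n m E \<rho> = Phi n m E \<rho>"
    unfolding Phi_def using ind1 ind2 by simp
  have LEc: "\<And>n m E. channel n m E \<Longrightarrow> linear_on n m E" unfolding channel_def by blast
  have AE: "axiom_E_with star ext"
    unfolding axiom_E_with_def
  proof (intro conjI allI impI)
    fix n m E \<rho> assume h: "n > 0" "m > 0" "channel n m E \<and> density n \<rho>"
    have c: "\<rho> \<in> carrier_mat n n" using h density_carrier by blast
    have "Phi n m E \<rho> \<in> carrier_mat (n*m) (n*m)" unfolding Phi_def by simp
    then show "ext n m 1 E \<rho> = star n m E \<rho>"
      unfolding ext_def using app1_one[OF c] starPhi[OF h(1,2)] h(3) by simp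
  next
    fix n m e E X assume h: "n > 0" "m > 0" "e > 0" "channel n m E \<and> qsst star n e X"
    have Xc: "X \<in> carrier_mat (n*e) (n*e)" using qsst_carrier[OF _ S h(1) h(3)] h(4) by blast
    have LE: "linear_on n m E" using h LEc by blast
    show "ext n m e E X \<in> carrier_mat (n*m*e) (n*m*e)" unfolding ext_def by simp
    show "\<And>e' I. e' > 0 \<Longrightarrow> cp_tni e e' I \<Longrightarrow> app2 (n*m) e e' I (ext n m e E X) = ext n m e' E (app2 n e e' I X)"
    proof -
      fix e' I assume "e' > 0" "cp_tni e e' I"
      then have LI: "linear_on e e' I" unfolding cp_tni_def by blast
      show "app2 (n*m) e e' I (ext n m e E X) = ext n m e' E (app2 n e e' I X)"
        unfolding ext_def by (rule app2_app1_comm[OF PhiL[OF h(1) LE] LI Xc])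
    qed
    show "ptr1 n (m*e) (ext n m e E X) = app1 n m e E X"
      unfolding ext_def ptr1_app1 by (rule app1_cong) (use Phip[OF h(1) LE] in auto)
  qed
  have AP: "axiom_P_with star ext"
    unfolding axiom_P_with_def
  proof (intro allI impI)
    fix n m k E F \<rho> assume h: "n > 0" "m > 0" "k > 0" "channel n m E \<and> channel m k F \<and> density n \<rho>"
    have LE: "linear_on n m E" and LF: "linear_on m k F" using h LEc by blast+
    have cE: "\<forall>Y\<in>carrier_mat n n. E Y \<in> carrier_mat m m" using LE unfolding linear_on_def by blast
    have "ptr1 m (k*n) (ext m k n F (reorder n m (star n m E \<rho>))) = app1 m k n F (reorder n m (star n m E \<rho>))"
      unfolding ext_def ptr1_app1 by (rule app1_cong) (use Phip[OF h(2) LF] in auto)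
    then have "reorder k n (ptr1 m (k*n) (ext m k n F (reorder n m (star n m E \<rho>)))) = app2 n m k F (star n m E \<rho>)"
      by (simp add: reorder_app1)
    also have "\<dots> = app2 n n k (F \<circ> E) (F0 n \<rho> + Xi n \<rho>)"
      using starPhi[OF h(1,2)] h(4) unfolding Phi_def by (simp add: app2_comp[OF cE])
    also have "\<dots> = star n k (F \<circ> E) \<rho>"
      using starPhi[OF h(1,3) channel_comp, of m E F \<rho>] h(4) unfolding Phi_def by simp
    finally show "reorder k n (ptr1 m (k*n) (ext m k n F (reorder n m (star n m E \<rho>)))) = star n k (F \<circ> E) \<rho>" .
  qed
  show "axiom_EP star" unfolding axiom_EP_def using AE AP by blast
  show "axiom_Jhat star" unfolding axiom_Jhat_def
  proof (intro allI impI)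
    fix n m E assume h: "n > 0" "m > 0" "channel n m E"
    have LE: "linear_on n m E" using h LEc by blast
    have "Xi n ((1 / of_nat n) \<cdot>\<^sub>m 1\<^sub>m n) = (1 / of_nat n) \<cdot>\<^sub>m Xi n (1\<^sub>m n)"
      using XL[OF h(1)] unfolding linear_on_def by simp
    also have "\<dots> = 0\<^sub>m (n*n) (n*n)" using X1[OF h(1)] by simp
    finally have z: "Xi n ((1 / of_nat n) \<cdot>\<^sub>m 1\<^sub>m n) = 0\<^sub>m (n*n) (n*n)" .
    have "F0 n ((1 / of_nat n) \<cdot>\<^sub>m 1\<^sub>m n) + Xi n ((1 / of_nat n) \<cdot>\<^sub>m 1\<^sub>m n) = (1 / of_nat n) \<cdot>\<^sub>m swap_op n"
      using F0_pi[OF h(1)] z by simp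
    then show "star n m E ((1 / of_nat n) \<cdot>\<^sub>m 1\<^sub>m n) = (1 / of_nat n) \<cdot>\<^sub>m app2 n n m E (swap_op n)"
      using starPhi[OF h(1,2,3) density_pi[OF h(1)]] unfolding Phi_def by (simp add: app2_smult[OF LE])
  qed
qed

lemma herm_add: assumes "hermitian k A" "hermitian k B" shows "hermitian k (A + B)"
proof -
  note a = hermitian_D[OF assms(1)] and b = hermitian_D[OF assms(2)]
  show ?thesis unfolding hermitian_def
  proof (intro conjI allI impI)
    fix i j assume "i < k" "j < k"
    then show "(A + B) $$ (j,i) = cnj ((A + B) $$ (i,j))" using a b by simp
  qed (use a b in simp)
qed

lemma backward_T:
  assumes S: "state_over_time_function star" and XB: "Xi_basic Xi" and ind: "induced_by star Xi"
    and sym: "\<forall>n>0. \<forall>X\<in>carrier_mat n n. swap_op n * Xi n X * swap_op n = Xi n X"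
  shows "axiom_T star"
  unfolding axiom_T_def
proof (intro allI impI)
  fix n \<rho> assume n: "n > 0" and d: "density n \<rho>"
  have c: "\<rho> \<in> carrier_mat n n" using d density_carrier by blast
  have XC: "Xi n \<rho> \<in> carrier_mat (n*n) (n*n)" using XB n c unfolding Xi_basic_def linear_on_def by blast
  have e: "star n n id \<rho> = F0 n \<rho> + Xi n \<rho>"
    using ind n d unfolding induced_by_def by (simp add: id_star_form_F0)
  have "swap_op n * star n n id \<rho> * swap_op n = reorder n n (F0 n \<rho> + Xi n \<rho>)"
    unfolding e using XC by (simp add: swap_conj)
  also have "\<dots> = F0 n \<rho> + reorder n n (Xi n \<rho>)"
    using XC by (simp add: reorder_add reorder_F0[OF c])
  also have "reorder n n (Xi n \<rho>) = Xi n \<rho>"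
    using sym n c XC swap_conj[OF XC] by metis
  finally show "swap_op n * star n n id \<rho> * swap_op n = star n n id \<rho>" using e[symmetric] by (rule trans)
qed

lemma backward_H:
  assumes S: "state_over_time_function star" and XB: "Xi_basic Xi" and ind: "induced_by star Xi"
    and hp: "\<forall>n>0. hermitian_preserving n (n*n) (Xi n)"
  shows "axiom_H star"
  unfolding axiom_H_def
proof (intro allI impI)
  fix n m E \<rho> assume n: "n > 0" "m > 0" and h: "channel n m E \<and> density n \<rho>"
  have H\<rho>: "hermitian n \<rho>" using h unfolding density_def by (blast intro: psd_hermitian)
  have e: "star n m E \<rho> = app2 n n m E (F0 n \<rho> + Xi n \<rho>)"
    using ind n h unfolding induced_by_def by (simp add: id_star_form_F0)
  have "hermitian (n*n) (F0 n \<rho> + Xi n \<rho>)"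
    using herm_add[OF F0_hermitian[OF H\<rho>]] hp n H\<rho> unfolding hermitian_preserving_def by blast
  then show "hermitian (n*m) (star n m E \<rho>)"
    unfolding e using h n app2_hermitian unfolding channel_def by blast
qed

lemma qf_core:
  assumes inj: "inj_on g {..<k}" and rng: "g ` {..<k} \<subseteq> {..<N}"
    and z: "\<And>a b. a < N \<Longrightarrow> b < N \<Longrightarrow> a \<notin> g ` {..<k} \<or> b \<notin> g ` {..<k} \<Longrightarrow> cnj (w a) * X $$ (a,b) * w b = 0"
  shows "qf N X w = qf k (mat k k (\<lambda>(r,c). X $$ (g r, g c))) (w \<circ> g)"
proof -
  have "qf N X w = (\<Sum>a\<in>g ` {..<k}. \<Sum>b\<in>g ` {..<k}. cnj (w a) * X $$ (a,b) * w b)"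
    by (rule qf_restrict[OF rng z]) auto
  also have "\<dots> = (\<Sum>r<k. \<Sum>c<k. cnj (w (g r)) * X $$ (g r, g c) * w (g c))"
    by (simp add: sum.reindex[OF inj])
  also have "\<dots> = qf k (mat k k (\<lambda>(r,c). X $$ (g r, g c))) (w \<circ> g)"
    unfolding qf_def by (intro sum.cong refl) auto
  finally show ?thesis .
qed

lemma psd_compress:
  assumes P: "psd N X" and inj: "inj_on g {..<k}" and rng: "g ` {..<k} \<subseteq> {..<N}"
  shows "psd k (mat k k (\<lambda>(r,c). X $$ (g r, g c)))"
  unfolding psd_iff
proof (intro conjI allI)
  fix v
  define w :: "nat \<Rightarrow> complex" where "w = (\<lambda>a. if a \<in> g ` {..<k} then v (the_inv_into {..<k} g a) else 0)"
  have wg: "w \<circ> g = (\<lambda>r. if r < k then v r else w (g r))"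
    unfolding w_def using inj by (auto simp: the_inv_into_f_f fun_eq_iff)
  have "qf N X w = qf k (mat k k (\<lambda>(r,c). X $$ (g r, g c))) (w \<circ> g)"
    by (rule qf_core[OF inj rng]) (auto simp: w_def)
  also have "\<dots> = qf k (mat k k (\<lambda>(r,c). X $$ (g r, g c))) v"
    unfolding qf_def wg by (intro sum.cong refl) auto
  finally have q: "qf N X w = qf k (mat k k (\<lambda>(r,c). X $$ (g r, g c))) v" .
  show "Im (qf k (mat k k (\<lambda>(r,c). X $$ (g r, g c))) v) = 0" "0 \<le> Re (qf k (mat k k (\<lambda>(r,c). X $$ (g r, g c))) v)"
    using P unfolding psd_iff q[symmetric] by auto
qed simp

lemma psd_embed:
  assumes P: "psd k Y" and inj: "inj_on g {..<k}" and rng: "g ` {..<k} \<subseteq> {..<N}"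
    and X: "X \<in> carrier_mat N N"
    and z: "\<And>a b. a < N \<Longrightarrow> b < N \<Longrightarrow> a \<notin> g ` {..<k} \<or> b \<notin> g ` {..<k} \<Longrightarrow> X $$ (a,b) = 0"
    and e: "\<And>r c. r < k \<Longrightarrow> c < k \<Longrightarrow> X $$ (g r, g c) = Y $$ (r,c)"
  shows "psd N X"
  unfolding psd_iff
proof (intro conjI allI)
  show "X \<in> carrier_mat N N" by (rule X)
  fix w
  have "qf N X w = qf k (mat k k (\<lambda>(r,c). X $$ (g r, g c))) (w \<circ> g)"
    by (rule qf_core[OF inj rng]) (use z in auto)
  also have "mat k k (\<lambda>(r,c). X $$ (g r, g c)) = Y"
  proof -
    have Yc: "Y \<in> carrier_mat k k" using P psd_carrier by blast
    show ?thesis by (rule eq_matI) (use Yc e in auto)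
  qed
  finally have q: "qf N X w = qf k Y (w \<circ> g)" .
  show "Im (qf N X w) = 0" "0 \<le> Re (qf N X w)" using P unfolding psd_iff q by auto
qed

lemma psd_add: assumes "psd n A" "psd n B" shows "psd n (A + B)"
proof -
  have c: "A \<in> carrier_mat n n" "B \<in> carrier_mat n n" using assms psd_carrier by auto
  have q: "\<And>v. qf n (A + B) v = qf n A v + qf n B v"
    unfolding qf_def using c by (auto simp: sum.distrib[symmetric] algebra_simps intro!: sum.cong)
  show ?thesis using assms c unfolding psd_iff q by auto
qed

definition P0m :: cmap where "P0m Y = mat 1 1 (\<lambda>_. Y $$ (0,0))"
definition P1m :: cmap where "P1m Y = mat 1 1 (\<lambda>_. Y $$ (1,1))"
definition T2m :: cmap where "T2m Y = mat 1 1 (\<lambda>_. Y $$ (0,0) + Y $$ (1,1))"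
definition Scm :: "real \<Rightarrow> cmap" where "Scm p Y = mat 1 1 (\<lambda>_. complex_of_real p * Y $$ (0,0))"

lemma app2_P0m: "app2 k 2 1 P0m X = mat k k (\<lambda>(r,c). X $$ (r*2, c*2))"
  by (rule eq_matI) (auto simp: app2_index P0m_def)
lemma app2_P1m: "app2 k 2 1 P1m X = mat k k (\<lambda>(r,c). X $$ (r*2+1, c*2+1))"
  by (rule eq_matI) (auto simp: app2_index P1m_def)
lemma app2_T2m: "app2 k 2 1 T2m X = app2 k 2 1 P0m X + app2 k 2 1 P1m X"
  by (rule eq_matI) (auto simp: app2_index P0m_def P1m_def T2m_def)
lemma app2_Scm: "X \<in> carrier_mat k k \<Longrightarrow> app2 k 1 1 (Scm p) X = complex_of_real p \<cdot>\<^sub>m X"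
  by (rule eq_matI) (auto simp: app2_index Scm_def)

lemma mtrace1: "mtrace (mat 1 1 f) = f (0,0)" "mtrace (mat (Suc 0) (Suc 0) f) = f (0,0)"
  by (simp_all add: mtrace_def)
lemma mtrace2: "X \<in> carrier_mat 2 2 \<Longrightarrow> mtrace X = X $$ (0,0) + X $$ (1,1)"
  by (simp add: mtrace_def numeral_2_eq_2)

lemma inj_times2: "inj_on (\<lambda>r::nat. r*2) A" by (auto simp: inj_on_def)
lemma inj_times2p: "inj_on (\<lambda>r::nat. r*2+1) A" by (auto simp: inj_on_def)
lemma rng_times2: "(\<lambda>r::nat. r*2) ` {..<k} \<subseteq> {..<k*2}" by auto
lemma rng_times2p: "(\<lambda>r::nat. r*2+1) ` {..<k} \<subseteq> {..<k*2}" by auto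

lemma psd_P0: "psd (k*2) X \<Longrightarrow> psd k (app2 k 2 1 P0m X)"
  unfolding app2_P0m by (rule psd_compress[OF _ inj_times2 rng_times2])
lemma psd_P1: "psd (k*2) X \<Longrightarrow> psd k (app2 k 2 1 P1m X)"
  unfolding app2_P1m by (rule psd_compress[OF _ inj_times2p rng_times2p])

lemma lin_P0: "linear_on 2 1 P0m" unfolding linear_on_def by (auto simp: P0m_def intro!: eq_matI)
lemma lin_P1: "linear_on 2 1 P1m" unfolding linear_on_def by (auto simp: P1m_def intro!: eq_matI)
lemma lin_T2: "linear_on 2 1 T2m" unfolding linear_on_def by (auto simp: T2m_def algebra_simps intro!: eq_matI)
lemma lin_Sc: "linear_on 1 1 (Scm p)" unfolding linear_on_def by (auto simp: Scm_def algebra_simps intro!: eq_matI)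

lemma cp_tni_P0: "cp_tni 2 1 P0m"
  unfolding cp_tni_def completely_positive_def
proof (intro conjI)
  show "linear_on 2 1 P0m" by (rule lin_P0)
  show "\<forall>k>0. \<forall>X. psd (k*2) X \<longrightarrow> psd (k*1) (app2 k 2 1 P0m X)" using psd_P0 by simp
  show "\<forall>X. psd 2 X \<longrightarrow> Re (mtrace (P0m X)) \<le> Re (mtrace X)"
  proof (intro allI impI)
    fix X :: cmat assume "psd 2 X"
    then show "Re (mtrace (P0m X)) \<le> Re (mtrace X)"
      using psd_diag[of 2 X 1] by (simp add: P0m_def mtrace1 mtrace2 psd_carrier)
  qed
qed

lemma cp_tni_P1: "cp_tni 2 1 P1m"
  unfolding cp_tni_def completely_positive_def
proof (intro conjI)
  show "linear_on 2 1 P1m" by (rule lin_P1)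
  show "\<forall>k>0. \<forall>X. psd (k*2) X \<longrightarrow> psd (k*1) (app2 k 2 1 P1m X)" using psd_P1 by simp
  show "\<forall>X. psd 2 X \<longrightarrow> Re (mtrace (P1m X)) \<le> Re (mtrace X)"
  proof (intro allI impI)
    fix X :: cmat assume "psd 2 X"
    then show "Re (mtrace (P1m X)) \<le> Re (mtrace X)"
      using psd_diag[of 2 X 0] by (simp add: P1m_def mtrace1 mtrace2 psd_carrier)
  qed
qed

lemma cp_tni_T2: "cp_tni 2 1 T2m"
  unfolding cp_tni_def completely_positive_def
proof (intro conjI)
  show "linear_on 2 1 T2m" by (rule lin_T2)
  show "\<forall>k>0. \<forall>X. psd (k*2) X \<longrightarrow> psd (k*1) (app2 k 2 1 T2m X)"
    unfolding app2_T2m using psd_P0 psd_P1 psd_add by simp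
  show "\<forall>X. psd 2 X \<longrightarrow> Re (mtrace (T2m X)) \<le> Re (mtrace X)"
  proof (intro allI impI)
    fix X :: cmat assume "psd 2 X"
    then show "Re (mtrace (T2m X)) \<le> Re (mtrace X)"
      by (simp add: T2m_def mtrace1 mtrace2 psd_carrier)
  qed
qed

lemma cp_tni_Sc: assumes "0 \<le> p" "p \<le> 1" shows "cp_tni 1 1 (Scm p)"
  unfolding cp_tni_def completely_positive_def
proof (intro conjI)
  show "linear_on 1 1 (Scm p)" by (rule lin_Sc)
  show "\<forall>k>0. \<forall>X. psd (k*1) X \<longrightarrow> psd (k*1) (app2 k 1 1 (Scm p) X)"
  proof (intro allI impI)
    fix k and X :: cmat assume "k > 0" "psd (k*1) X"
    then have "psd (k*1) (complex_of_real p \<cdot>\<^sub>m X)" using assms psd_smult by simp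
    then show "psd (k*1) (app2 k 1 1 (Scm p) X)"
      using app2_Scm[of X "k*1" p] psd_carrier[OF \<open>psd (k*1) X\<close>] by simp
  qed
  show "\<forall>X. psd 1 X \<longrightarrow> Re (mtrace (Scm p X)) \<le> Re (mtrace X)"
  proof (intro allI impI)
    fix X :: cmat assume X: "psd 1 X"
    have r: "Re (X $$ (0,0)) \<ge> 0" using psd_diag[OF X] by simp
    have t: "mtrace X = X $$ (0,0)" using psd_carrier[OF X] by (simp add: mtrace_def)
    show "Re (mtrace (Scm p X)) \<le> Re (mtrace X)"
      using assms r unfolding t by (simp add: Scm_def mtrace1 mult_left_le_one_le)
  qed
qed

lemma AE_rules:
  assumes "axiom_E_with star ext"
  shows "\<And>n m E \<rho>. n > 0 \<Longrightarrow> m > 0 \<Longrightarrow> channel n m E \<Longrightarrow> density n \<rho> \<Longrightarrow> ext n m 1 E \<rho> = star n m E \<rho>"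
    and "\<And>n m e E X e' I. n > 0 \<Longrightarrow> m > 0 \<Longrightarrow> e > 0 \<Longrightarrow> channel n m E \<Longrightarrow> qsst star n e X \<Longrightarrow> e' > 0 \<Longrightarrow> cp_tni e e' I
      \<Longrightarrow> app2 (n*m) e e' I (ext n m e E X) = ext n m e' E (app2 n e e' I X)"
    and "\<And>n m e E X. n > 0 \<Longrightarrow> m > 0 \<Longrightarrow> e > 0 \<Longrightarrow> channel n m E \<Longrightarrow> qsst star n e X \<Longrightarrow> ext n m e E X \<in> carrier_mat (n*m*e) (n*m*e)"
    and "\<And>n m e E X. n > 0 \<Longrightarrow> m > 0 \<Longrightarrow> e > 0 \<Longrightarrow> channel n m E \<Longrightarrow> qsst star n e X \<Longrightarrow> ptr1 n (m*e) (ext n m e E X) = app1 n m e E X"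
proof -
  have h1: "\<forall>n>0. \<forall>m>0. \<forall>E \<rho>. channel n m E \<and> density n \<rho> \<longrightarrow> ext n m 1 E \<rho> = star n m E \<rho>"
    using assms unfolding axiom_E_with_def by (rule conjunct1)
  have h2: "\<forall>n>0. \<forall>m>0. \<forall>e>0. \<forall>E X. channel n m E \<and> qsst star n e X \<longrightarrow>
        ext n m e E X \<in> carrier_mat (n*m*e) (n*m*e) \<and>
        (\<forall>e'>0. \<forall>I. cp_tni e e' I \<longrightarrow>
            app2 (n*m) e e' I (ext n m e E X) = ext n m e' E (app2 n e e' I X)) \<and>
        ptr1 n (m*e) (ext n m e E X) = app1 n m e E X"
    using assms unfolding axiom_E_with_def by (rule conjunct2)
  note h1' = h1[rule_format] and h2' = h2[rule_format]
  show "\<And>n m E \<rho>. n > 0 \<Longrightarrow> m > 0 \<Longrightarrow> channel n m E \<Longrightarrow> density n \<rho> \<Longrightarrow> ext n m 1 E \<rho> = star n m E \<rho>"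
    using h1' by blast
  fix n m e E X
  assume a: "n > 0" "m > 0" "e > 0" "channel n m E" "qsst star n e X"
  note b = h2'[OF a(1-3) conjI[OF a(4,5)]]
  show "ext n m e E X \<in> carrier_mat (n*m*e) (n*m*e)" using b by (rule conjunct1)
  show "ptr1 n (m*e) (ext n m e E X) = app1 n m e E X" using b by (rule conjunct2[THEN conjunct2])
  fix e' I assume "e' > 0" "cp_tni e e' I"
  then show "app2 (n*m) e e' I (ext n m e E X) = ext n m e' E (app2 n e e' I X)"
    using b[THEN conjunct2, THEN conjunct1] by blast
qed

lemma density_mix: assumes "density n \<rho>1" "density n \<rho>2" "0 \<le> p" "p \<le> 1"
  shows "density n (complex_of_real p \<cdot>\<^sub>m \<rho>1 + complex_of_real (1-p) \<cdot>\<^sub>m \<rho>2)"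
proof -
  have c: "\<rho>1 \<in> carrier_mat n n" "\<rho>2 \<in> carrier_mat n n" using assms density_carrier by auto
  have "psd n (complex_of_real p \<cdot>\<^sub>m \<rho>1 + complex_of_real (1-p) \<cdot>\<^sub>m \<rho>2)"
    using assms unfolding density_def by (intro psd_add psd_smult) auto
  moreover have "mtrace (complex_of_real p \<cdot>\<^sub>m \<rho>1 + complex_of_real (1-p) \<cdot>\<^sub>m \<rho>2) = 1"
    using assms c unfolding density_def by (simp add: mtrace_add[of _ n] mtrace_smult[of _ n] algebra_simps)
  ultimately show ?thesis unfolding density_def by simp
qed

lemma star_convex:
  assumes S: "state_over_time_function star" and AE: "axiom_E_with star ext"
    and n: "n > 0" and m: "m > 0" and E: "channel n m E"
    and d1: "density n \<rho>1" and d2: "density n \<rho>2" and p: "0 \<le> p" "p \<le> 1"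
  shows "star n m E (complex_of_real p \<cdot>\<^sub>m \<rho>1 + complex_of_real (1-p) \<cdot>\<^sub>m \<rho>2)
     = complex_of_real p \<cdot>\<^sub>m star n m E \<rho>1 + complex_of_real (1-p) \<cdot>\<^sub>m star n m E \<rho>2"
proof -
  note R = AE_rules[OF AE]
  have c1: "\<rho>1 \<in> carrier_mat n n" and c2: "\<rho>2 \<in> carrier_mat n n" using d1 d2 density_carrier by auto
  define J0 where "J0 = mat (n*2) (n*2) (\<lambda>(r,c). if r mod 2 = 0 \<and> c mod 2 = 0 then complex_of_real p * \<rho>1 $$ (r div 2, c div 2) else 0)"
  define J1 where "J1 = mat (n*2) (n*2) (\<lambda>(r,c). if r mod 2 = 1 \<and> c mod 2 = 1 then complex_of_real (1-p) * \<rho>2 $$ (r div 2, c div 2) else 0)"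
  define X where "X = J0 + J1"
  have im0: "\<And>a. a < n*2 \<Longrightarrow> a \<notin> (\<lambda>r. r*2) ` {..<n} \<Longrightarrow> a mod 2 \<noteq> 0"
  proof -
    fix a :: nat assume a: "a < n*2" "a \<notin> (\<lambda>r. r*2) ` {..<n}"
    show "a mod 2 \<noteq> 0"
    proof
      assume "a mod 2 = 0"
      then have "a = (a div 2)*2" using div_mult_mod_eq[of a 2] by simp
      moreover have "a div 2 < n" using a by simp
      ultimately show False using a(2) by blast
    qed
  qed
  have im1: "\<And>a. a < n*2 \<Longrightarrow> a \<notin> (\<lambda>r. r*2+1) ` {..<n} \<Longrightarrow> a mod 2 \<noteq> 1"
  proof -
    fix a :: nat assume a: "a < n*2" "a \<notin> (\<lambda>r. r*2+1) ` {..<n}"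
    show "a mod 2 \<noteq> 1"
    proof
      assume "a mod 2 = 1"
      then have "a = (a div 2)*2+1" using div_mult_mod_eq[of a 2] by simp
      moreover have "a div 2 < n" using a by simp
      ultimately show False using a(2) by blast
    qed
  qed
  have P0: "psd (n*2) J0"
    by (rule psd_embed[OF psd_smult[OF _ p(1)] inj_times2 rng_times2, of n \<rho>1])
       (use d1 c1 im0 in \<open>auto simp: J0_def density_def\<close>)
  have P1: "psd (n*2) J1"
    by (rule psd_embed[OF psd_smult[of n \<rho>2 "1-p"] inj_times2p rng_times2p])
       (use d2 c2 im1 p in \<open>auto simp: J1_def density_def\<close>)
  have Xc: "X \<in> carrier_mat (n*2) (n*2)" unfolding X_def J0_def J1_def by simp
  have Xe: "\<And>r c. r < n \<Longrightarrow> c < n \<Longrightarrow> X $$ (r*2, c*2) = complex_of_real p * \<rho>1 $$ (r,c)"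
    "\<And>r c. r < n \<Longrightarrow> c < n \<Longrightarrow> X $$ (r*2+1, c*2+1) = complex_of_real (1-p) * \<rho>2 $$ (r,c)"
    by (auto simp: X_def J0_def J1_def dm_lt[of _ n _ 2, simplified])
  have trX: "mtrace X = 1"
  proof -
    have "mtrace X = (\<Sum>t<n*2. X $$ (t,t))" using Xc by (simp add: mtrace_carrier)
    also have "\<dots> = (\<Sum>r<n. X $$ (r*2, r*2) + X $$ (r*2+1, r*2+1))" by (rule sum_pair2)
    also have "\<dots> = (\<Sum>r<n. complex_of_real p * \<rho>1 $$ (r,r) + complex_of_real (1-p) * \<rho>2 $$ (r,r))"
    proof (rule sum.cong[OF refl])
      fix r assume "r \<in> {..<n}" then have r: "r < n" by simp
      show "X $$ (r*2, r*2) + X $$ (r*2+1, r*2+1) = complex_of_real p * \<rho>1 $$ (r,r) + complex_of_real (1-p) * \<rho>2 $$ (r,r)"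
        unfolding Xe(1)[OF r r] Xe(2)[OF r r] by (rule refl)
    qed
    also have "\<dots> = complex_of_real p * mtrace \<rho>1 + complex_of_real (1-p) * mtrace \<rho>2"
      using c1 c2 by (simp add: sum.distrib sum_distrib_left mtrace_carrier)
    also have "\<dots> = 1" using d1 d2 unfolding density_def by (simp add: algebra_simps)
    finally show ?thesis .
  qed
  have dX: "density (n*2) X" unfolding density_def X_def using psd_add[OF P0 P1] trX X_def by simp
  have qX: "qsst star n 2 X" unfolding qsst_def using dX by simp
  have q1: "qsst star n 1 \<rho>1" "qsst star n 1 \<rho>2" unfolding qsst_def using d1 d2 by simp_all
  define M where "M = complex_of_real p \<cdot>\<^sub>m \<rho>1 + complex_of_real (1-p) \<cdot>\<^sub>m \<rho>2"
  have dM: "density n M" unfolding M_def by (rule density_mix[OF d1 d2 p])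
  have A0: "app2 n 2 1 P0m X = app2 n 1 1 (Scm p) \<rho>1"
    unfolding app2_P0m app2_Scm[OF c1]
    by (rule eq_matI) (use c1 Xe in auto)
  have A1: "app2 n 2 1 P1m X = app2 n 1 1 (Scm (1-p)) \<rho>2"
    unfolding app2_P1m app2_Scm[OF c2]
    by (rule eq_matI) (use c2 Xe in auto)
  have AT: "app2 n 2 1 T2m X = M"
    unfolding app2_T2m A0 A1 M_def
    using app2_Scm[OF c1] app2_Scm[OF c2] by simp
  define Z where "Z = ext n m 2 E X"
  have sc1: "star n m E \<rho>1 \<in> carrier_mat (n*m) (n*m)" "star n m E \<rho>2 \<in> carrier_mat (n*m) (n*m)"
    using S n m E d1 d2 unfolding state_over_time_function_def by blast+
  have e0: "app2 (n*m) 2 1 P0m Z = complex_of_real p \<cdot>\<^sub>m star n m E \<rho>1"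
  proof -
    have "app2 (n*m) 2 1 P0m Z = ext n m 1 E (app2 n 2 1 P0m X)"
      unfolding Z_def by (rule R(2)[OF n m _ E qX _ cp_tni_P0]) simp_all
    also have "\<dots> = ext n m 1 E (app2 n 1 1 (Scm p) \<rho>1)" by (simp only: A0)
    also have "\<dots> = app2 (n*m) 1 1 (Scm p) (ext n m 1 E \<rho>1)"
      by (rule R(2)[OF n m _ E q1(1) _ cp_tni_Sc[OF p], symmetric]) simp_all
    also have "\<dots> = app2 (n*m) 1 1 (Scm p) (star n m E \<rho>1)" by (simp only: R(1)[OF n m E d1])
    also have "\<dots> = complex_of_real p \<cdot>\<^sub>m star n m E \<rho>1" by (rule app2_Scm[OF sc1(1)])
    finally show ?thesis .
  qed
  have e1: "app2 (n*m) 2 1 P1m Z = complex_of_real (1-p) \<cdot>\<^sub>m star n m E \<rho>2"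
  proof -
    have p': "0 \<le> 1-p" "1-p \<le> 1" using p by auto
    have "app2 (n*m) 2 1 P1m Z = ext n m 1 E (app2 n 2 1 P1m X)"
      unfolding Z_def by (rule R(2)[OF n m _ E qX _ cp_tni_P1]) simp_all
    also have "\<dots> = ext n m 1 E (app2 n 1 1 (Scm (1-p)) \<rho>2)" by (simp only: A1)
    also have "\<dots> = app2 (n*m) 1 1 (Scm (1-p)) (ext n m 1 E \<rho>2)"
      by (rule R(2)[OF n m _ E q1(2) _ cp_tni_Sc[OF p'], symmetric]) simp_all
    also have "\<dots> = app2 (n*m) 1 1 (Scm (1-p)) (star n m E \<rho>2)" by (simp only: R(1)[OF n m E d2])
    also have "\<dots> = complex_of_real (1-p) \<cdot>\<^sub>m star n m E \<rho>2" by (rule app2_Scm[OF sc1(2)])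
    finally show ?thesis .
  qed
  have "star n m E M = ext n m 1 E M" by (rule R(1)[OF n m E dM, symmetric])
  also have "\<dots> = ext n m 1 E (app2 n 2 1 T2m X)" by (simp only: AT)
  also have "\<dots> = app2 (n*m) 2 1 T2m Z"
    unfolding Z_def by (rule R(2)[OF n m _ E qX _ cp_tni_T2, symmetric]) simp_all
  also have "\<dots> = app2 (n*m) 2 1 P0m Z + app2 (n*m) 2 1 P1m Z" by (rule app2_T2m)
  finally show ?thesis unfolding M_def e0 e1 .
qed

locale cvx =
  fixes f :: "cmat \<Rightarrow> cmat" and n d :: nat
  assumes conv: "\<And>\<rho>1 \<rho>2 p. density n \<rho>1 \<Longrightarrow> density n \<rho>2 \<Longrightarrow> 0 \<le> p \<Longrightarrow> p \<le> 1 \<Longrightarrow>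
      f (complex_of_real p \<cdot>\<^sub>m \<rho>1 + complex_of_real (1-p) \<cdot>\<^sub>m \<rho>2) = complex_of_real p \<cdot>\<^sub>m f \<rho>1 + complex_of_real (1-p) \<cdot>\<^sub>m f \<rho>2"
    and car: "\<And>\<rho>. density n \<rho> \<Longrightarrow> f \<rho> \<in> carrier_mat d d"
begin

lemma fin_convex:
  assumes "finite K"
  shows "\<forall>w. (\<forall>k\<in>K. density n (\<sigma> k)) \<longrightarrow> (\<forall>k\<in>K. w k \<ge> 0) \<longrightarrow> sum w K = 1 \<longrightarrow>
    density n (msum n K (\<lambda>k. complex_of_real (w k)) \<sigma>) \<and>
    f (msum n K (\<lambda>k. complex_of_real (w k)) \<sigma>) = msum d K (\<lambda>k. complex_of_real (w k)) (\<lambda>k. f (\<sigma> k))"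
  using assms
proof (induction K rule: finite_induct)
  case empty
  then show ?case by simp
next
  case (insert a K)
  show ?case
  proof (intro allI impI)
    fix w :: "'a \<Rightarrow> real"
    assume ds: "\<forall>k\<in>insert a K. density n (\<sigma> k)" and wn: "\<forall>k\<in>insert a K. 0 \<le> w k" and ws: "sum w (insert a K) = 1"
    have sa: "w a + sum w K = 1" using ws insert by simp
    have sK: "sum w K \<ge> 0" using wn by (intro sum_nonneg) auto
    have da: "density n (\<sigma> a)" using ds by simp
    have ca: "\<sigma> a \<in> carrier_mat n n" using da density_carrier by blast
    have fca: "f (\<sigma> a) \<in> carrier_mat d d" using car da by blast
    show "density n (msum n (insert a K) (\<lambda>k. complex_of_real (w k)) \<sigma>) \<and>
      f (msum n (insert a K) (\<lambda>k. complex_of_real (w k)) \<sigma>) = msum d (insert a K) (\<lambda>k. complex_of_real (w k)) (\<lambda>k. f (\<sigma> k))"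
    proof (cases "w a = 1")
      case True
      then have "sum w K = 0" using sa by simp
      then have z: "\<forall>k\<in>K. w k = 0" using sum_nonneg_eq_0_iff[OF insert(1)] wn by auto
      have e1: "msum n (insert a K) (\<lambda>k. complex_of_real (w k)) \<sigma> = \<sigma> a"
        by (rule eq_matI) (use ca z True insert in \<open>auto simp: sum.insert\<close>)
      have e2: "msum d (insert a K) (\<lambda>k. complex_of_real (w k)) (\<lambda>k. f (\<sigma> k)) = f (\<sigma> a)"
        by (rule eq_matI) (use fca z True insert in \<open>auto simp: sum.insert\<close>)
      show ?thesis unfolding e1 e2 using da by simp
    next
      case False
      then have wa1: "w a < 1" using sa sK by simp
      define q where "q = 1 - w a"
      have q: "q > 0" unfolding q_def using wa1 by simp
      define w' where "w' k = w k / q" for k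
      have w'n: "\<forall>k\<in>K. 0 \<le> w' k" using wn q unfolding w'_def by auto
      have w's: "sum w' K = 1" unfolding w'_def using sa q by (simp add: sum_divide_distrib[symmetric] q_def)
      have IH: "density n (msum n K (\<lambda>k. complex_of_real (w' k)) \<sigma>) \<and>
        f (msum n K (\<lambda>k. complex_of_real (w' k)) \<sigma>) = msum d K (\<lambda>k. complex_of_real (w' k)) (\<lambda>k. f (\<sigma> k))"
        using insert.IH ds w'n w's by simp
      define R where "R = msum n K (\<lambda>k. complex_of_real (w' k)) \<sigma>"
      have dR: "density n R" using IH R_def by simp
      have pa: "0 \<le> w a" "w a \<le> 1" using wn wa1 by auto
      have qa: "1 - w a = q" unfolding q_def by simp
      have e1: "msum n (insert a K) (\<lambda>k. complex_of_real (w k)) \<sigma> = complex_of_real (w a) \<cdot>\<^sub>m \<sigma> a + complex_of_real (1 - w a) \<cdot>\<^sub>m R"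
      proof (rule eq_matI)
        fix r s assume "r < dim_row (complex_of_real (w a) \<cdot>\<^sub>m \<sigma> a + complex_of_real (1 - w a) \<cdot>\<^sub>m R)"
          "s < dim_col (complex_of_real (w a) \<cdot>\<^sub>m \<sigma> a + complex_of_real (1 - w a) \<cdot>\<^sub>m R)"
        then have rs: "r < n" "s < n" unfolding R_def by auto
        have "(\<Sum>k\<in>K. complex_of_real (w k) * \<sigma> k $$ (r,s)) = complex_of_real q * (\<Sum>k\<in>K. complex_of_real (w' k) * \<sigma> k $$ (r,s))"
          unfolding sum_distrib_left w'_def using q by (intro sum.cong refl) (simp add: field_simps)
        then show "msum n (insert a K) (\<lambda>k. complex_of_real (w k)) \<sigma> $$ (r,s) = (complex_of_real (w a) \<cdot>\<^sub>m \<sigma> a + complex_of_real (1 - w a) \<cdot>\<^sub>m R) $$ (r,s)"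
          using rs ca insert(1,2) unfolding R_def qa by (simp add: sum.insert)
      qed (use ca in \<open>auto simp: R_def\<close>)
      have e2: "msum d (insert a K) (\<lambda>k. complex_of_real (w k)) (\<lambda>k. f (\<sigma> k)) = complex_of_real (w a) \<cdot>\<^sub>m f (\<sigma> a) + complex_of_real (1 - w a) \<cdot>\<^sub>m msum d K (\<lambda>k. complex_of_real (w' k)) (\<lambda>k. f (\<sigma> k))"
      proof (rule eq_matI)
        fix r s assume "r < dim_row (complex_of_real (w a) \<cdot>\<^sub>m f (\<sigma> a) + complex_of_real (1 - w a) \<cdot>\<^sub>m msum d K (\<lambda>k. complex_of_real (w' k)) (\<lambda>k. f (\<sigma> k)))"
          "s < dim_col (complex_of_real (w a) \<cdot>\<^sub>m f (\<sigma> a) + complex_of_real (1 - w a) \<cdot>\<^sub>m msum d K (\<lambda>k. complex_of_real (w' k)) (\<lambda>k. f (\<sigma> k)))"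
        then have rs: "r < d" "s < d" by auto
        have "(\<Sum>k\<in>K. complex_of_real (w k) * f (\<sigma> k) $$ (r,s)) = complex_of_real q * (\<Sum>k\<in>K. complex_of_real (w' k) * f (\<sigma> k) $$ (r,s))"
          unfolding sum_distrib_left w'_def using q by (intro sum.cong refl) (simp add: field_simps)
        then show "msum d (insert a K) (\<lambda>k. complex_of_real (w k)) (\<lambda>k. f (\<sigma> k)) $$ (r,s) = (complex_of_real (w a) \<cdot>\<^sub>m f (\<sigma> a) + complex_of_real (1 - w a) \<cdot>\<^sub>m msum d K (\<lambda>k. complex_of_real (w' k)) (\<lambda>k. f (\<sigma> k))) $$ (r,s)"
          using rs fca insert(1,2) unfolding qa by (simp add: sum.insert)
      qed (use fca in auto)
      show ?thesis
        unfolding e1 e2 using density_mix[OF da dR pa] conv[OF da dR pa] IH R_def by simp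
    qed
  qed
qed

lemma affine:
  assumes K: "finite K" and ds: "\<forall>k\<in>K. density n (\<sigma> k)" and cs: "sum c K = 1"
    and d: "density n \<rho>" and e: "\<rho> = msum n K (\<lambda>k. complex_of_real (c k)) \<sigma>"
  shows "f \<rho> = msum d K (\<lambda>k. complex_of_real (c k)) (\<lambda>k. f (\<sigma> k))"
proof -
  define Kp where "Kp = {k\<in>K. c k \<ge> 0}"
  define Kn where "Kn = {k\<in>K. c k < 0}"
  have fin: "finite Kp" "finite Kn" using K unfolding Kp_def Kn_def by auto
  have KU: "K = Kp \<union> Kn" "Kp \<inter> Kn = {}" unfolding Kp_def Kn_def by auto
  have split: "\<And>g :: _ \<Rightarrow> 'b::comm_monoid_add. sum g K = sum g Kp + sum g Kn"
    using KU fin by (simp add: sum.union_disjoint)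
  define s where "s = sum c Kp"
  have sn: "sum c Kn \<le> 0" unfolding Kn_def by (intro sum_nonpos) auto
  have s1: "s = 1 - sum c Kn" using cs split[of c] unfolding s_def by simp
  have s: "s \<ge> 1" using s1 sn by simp
  have spos: "s > 0" using s by simp
  define K1 where "K1 = insert None (Some ` Kn)"
  define sig1 where "sig1 = (\<lambda>x. case x of None \<Rightarrow> \<rho> | Some k \<Rightarrow> \<sigma> k)"
  define w1 where "w1 = (\<lambda>x. case x of None \<Rightarrow> 1 / s | Some k \<Rightarrow> - c k / s)"
  have sumK1: "\<And>g :: _ \<Rightarrow> 'b::comm_monoid_add. sum g K1 = g None + (\<Sum>k\<in>Kn. g (Some k))"
    unfolding K1_def using fin by (simp add: sum.insert sum.reindex)
  have fK1: "finite K1" unfolding K1_def using fin by simp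
  have ds1: "\<forall>x\<in>K1. density n (sig1 x)" using ds d unfolding K1_def sig1_def Kn_def by auto
  have wn1: "\<forall>x\<in>K1. 0 \<le> w1 x" using spos unfolding K1_def w1_def Kn_def by (auto simp: divide_nonpos_pos)
  have ws1: "sum w1 K1 = 1"
    unfolding sumK1 w1_def using spos s1 by (simp add: sum_divide_distrib[symmetric] sum_negf field_simps)
  define w2 where "w2 = (\<lambda>k. c k / s)"
  have ds2: "\<forall>k\<in>Kp. density n (\<sigma> k)" using ds unfolding Kp_def by auto
  have wn2: "\<forall>k\<in>Kp. 0 \<le> w2 k" using spos unfolding Kp_def w2_def by auto
  have ws2: "sum w2 Kp = 1" unfolding w2_def using spos s_def by (simp add: sum_divide_distrib[symmetric])
  have C1: "f (msum n K1 (\<lambda>x. complex_of_real (w1 x)) sig1) = msum d K1 (\<lambda>x. complex_of_real (w1 x)) (\<lambda>x. f (sig1 x))"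
    using fin_convex[OF fK1] ds1 wn1 ws1 by blast
  have C2: "f (msum n Kp (\<lambda>k. complex_of_real (w2 k)) \<sigma>) = msum d Kp (\<lambda>k. complex_of_real (w2 k)) (\<lambda>k. f (\<sigma> k))"
    using fin_convex[OF fin(1)] ds2 wn2 ws2 by blast
  have dc: "\<rho> \<in> carrier_mat n n" using d density_carrier by blast
  have eqM: "msum n K1 (\<lambda>x. complex_of_real (w1 x)) sig1 = msum n Kp (\<lambda>k. complex_of_real (w2 k)) \<sigma>"
  proof (rule eq_matI)
    fix r t assume "r < dim_row (msum n Kp (\<lambda>k. complex_of_real (w2 k)) \<sigma>)" "t < dim_col (msum n Kp (\<lambda>k. complex_of_real (w2 k)) \<sigma>)"
    then have rt: "r < n" "t < n" by auto
    have rho: "\<rho> $$ (r,t) = (\<Sum>k\<in>Kp. complex_of_real (c k) * \<sigma> k $$ (r,t)) + (\<Sum>k\<in>Kn. complex_of_real (c k) * \<sigma> k $$ (r,t))"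
      using e rt split by simp
    show "msum n K1 (\<lambda>x. complex_of_real (w1 x)) sig1 $$ (r,t) = msum n Kp (\<lambda>k. complex_of_real (w2 k)) \<sigma> $$ (r,t)"
      using rt spos unfolding msum_index[OF rt] sumK1 w1_def sig1_def w2_def
      by (simp add: sum_distrib_left[symmetric] sum_divide_distrib[symmetric] field_simps sum_negf rho)
  qed simp_all
  have fr: "f \<rho> \<in> carrier_mat d d" using car d by blast
  show ?thesis
  proof (rule eq_matI)
    fix r t assume "r < dim_row (msum d K (\<lambda>k. complex_of_real (c k)) (\<lambda>k. f (\<sigma> k)))" "t < dim_col (msum d K (\<lambda>k. complex_of_real (c k)) (\<lambda>k. f (\<sigma> k)))"
    then have rt: "r < d" "t < d" by auto
    have "msum d K1 (\<lambda>x. complex_of_real (w1 x)) (\<lambda>x. f (sig1 x)) $$ (r,t) = msum d Kp (\<lambda>k. complex_of_real (w2 k)) (\<lambda>k. f (\<sigma> k)) $$ (r,t)"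
      using C1 C2 eqM by simp
    then have h: "complex_of_real (1/s) * f \<rho> $$ (r,t) + (\<Sum>k\<in>Kn. complex_of_real (- c k / s) * f (\<sigma> k) $$ (r,t))
        = (\<Sum>k\<in>Kp. complex_of_real (c k / s) * f (\<sigma> k) $$ (r,t))"
      unfolding msum_index[OF rt] sumK1 w1_def sig1_def w2_def by simp
    have "f \<rho> $$ (r,t) = (\<Sum>k\<in>Kp. complex_of_real (c k) * f (\<sigma> k) $$ (r,t)) + (\<Sum>k\<in>Kn. complex_of_real (c k) * f (\<sigma> k) $$ (r,t))"
    proof -
      have "complex_of_real s * (complex_of_real (1/s) * f \<rho> $$ (r,t) + (\<Sum>k\<in>Kn. complex_of_real (- c k / s) * f (\<sigma> k) $$ (r,t)))
        = complex_of_real s * (\<Sum>k\<in>Kp. complex_of_real (c k / s) * f (\<sigma> k) $$ (r,t))" using h by simp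
      then have "complex_of_real s * f \<rho> $$ (r,t) = complex_of_real s * ((\<Sum>k\<in>Kp. complex_of_real (c k) * f (\<sigma> k) $$ (r,t)) + (\<Sum>k\<in>Kn. complex_of_real (c k) * f (\<sigma> k) $$ (r,t)))"
        using spos by (simp add: sum_distrib_left distrib_left sum_negf field_simps add_ac)
      then show ?thesis using spos by simp
    qed
    then show "f \<rho> $$ (r,t) = msum d K (\<lambda>k. complex_of_real (c k)) (\<lambda>k. f (\<sigma> k)) $$ (r,t)"
      using rt split[of "\<lambda>k. complex_of_real (c k) * f (\<sigma> k) $$ (r, t)"] by simp
  qed (use fr in auto)
qed

end

definition bs :: "nat \<Rightarrow> nat \<Rightarrow> nat \<Rightarrow> nat \<Rightarrow> complex" where
  "bs i j r s = (if i = j then (if r = i \<and> s = i then 1 else 0)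
    else if i < j then (if (r = i \<or> r = j) \<and> (s = i \<or> s = j) then 1/2 else 0)
    else (if (r = i \<and> s = i) \<or> (r = j \<and> s = j) then 1/2 else if r = j \<and> s = i then \<i>/2
          else if r = i \<and> s = j then -\<i>/2 else 0))"

definition bsig :: "nat \<Rightarrow> nat \<times> nat \<Rightarrow> cmat" where
  "bsig n k = mat n n (\<lambda>(r,s). bs (fst k) (snd k) r s)"

definition cf' :: "cmat \<Rightarrow> nat \<Rightarrow> nat \<Rightarrow> complex" where
  "cf' X i j = (if i < j then X $$ (i,j) + X $$ (j,i) else - \<i> * (X $$ (j,i) - X $$ (i,j)))"

definition bco :: "nat \<Rightarrow> cmat \<Rightarrow> nat \<times> nat \<Rightarrow> complex" where
  "bco n X k = (if fst k = snd k then X $$ (fst k, fst k) - (1/2) * (\<Sum>l\<in>{..<n}-{fst k}. cf' X (fst k) l + cf' X l (fst k))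
     else cf' X (fst k) (snd k))"

lemma bsig_carrier[simp]: "bsig n k \<in> carrier_mat n n" by (simp add: bsig_def)
lemma bsig_index[simp]: "r < n \<Longrightarrow> s < n \<Longrightarrow> bsig n k $$ (r,s) = bs (fst k) (snd k) r s"
  by (simp add: bsig_def)

definition KK :: "nat \<Rightarrow> (nat \<times> nat) set" where "KK n = {..<n} \<times> {..<n}"
lemma KK_finite[simp]: "finite (KK n)" by (simp add: KK_def)

lemma decomp_offdiag:
  assumes X: "X \<in> carrier_mat n n" and rs: "r < n" "s < n" "r \<noteq> s"
  shows "(\<Sum>k\<in>KK n. bco n X k * bs (fst k) (snd k) r s) = X $$ (r,s)"
proof -
  have "(\<Sum>k\<in>KK n. bco n X k * bs (fst k) (snd k) r s) = (\<Sum>k\<in>{(r,s),(s,r)}. bco n X k * bs (fst k) (snd k) r s)"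
  proof (rule sum.mono_neutral_right)
    show "\<forall>k\<in>KK n - {(r,s),(s,r)}. bco n X k * bs (fst k) (snd k) r s = 0"
    proof
      fix k assume k: "k \<in> KK n - {(r,s),(s,r)}"
      obtain i j where ij: "k = (i,j)" by fastforce
      have "bs i j r s = 0" using k rs(3) unfolding ij bs_def by auto
      then show "bco n X k * bs (fst k) (snd k) r s = 0" by (simp add: ij)
    qed
  qed (use rs in \<open>auto simp: KK_def\<close>)
  also have "\<dots> = bco n X (r,s) * bs r s r s + bco n X (s,r) * bs s r r s"
    using rs(3) by simp
  also have "\<dots> = X $$ (r,s)"
  proof (cases "r < s")
    case True
    then show ?thesis using rs(3) by (simp add: bco_def bs_def cf'_def field_simps)
  next
    case False
    then have "s < r" using rs(3) by simp
    then show ?thesis using rs(3) by (simp add: bco_def bs_def cf'_def field_simps)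
  qed
  finally show ?thesis .
qed

lemma decomp_diag:
  assumes X: "X \<in> carrier_mat n n" and r: "r < n"
  shows "(\<Sum>k\<in>KK n. bco n X k * bs (fst k) (snd k) r r) = X $$ (r,r)"
proof -
  define L where "L = {..<n} - {r}"
  define T where "T k = bco n X k * bs (fst k) (snd k) r r" for k
  have fL: "finite L" unfolding L_def by simp
  have "(\<Sum>k\<in>KK n. T k) = (\<Sum>k\<in>insert (r,r) ((\<lambda>l. (r,l)) ` L \<union> (\<lambda>l. (l,r)) ` L). T k)"
  proof (rule sum.mono_neutral_right)
    show "\<forall>k\<in>KK n - insert (r,r) ((\<lambda>l. (r,l)) ` L \<union> (\<lambda>l. (l,r)) ` L). T k = 0"
    proof
      fix k assume k: "k \<in> KK n - insert (r,r) ((\<lambda>l. (r,l)) ` L \<union> (\<lambda>l. (l,r)) ` L)"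
      obtain i j where ij: "k = (i,j)" by fastforce
      have "bs i j r r = 0" using k unfolding ij bs_def L_def KK_def by auto
      then show "T k = 0" by (simp add: ij T_def)
    qed
  qed (use r in \<open>auto simp: KK_def L_def\<close>)
  also have "\<dots> = T (r,r) + ((\<Sum>l\<in>L. T (r,l)) + (\<Sum>l\<in>L. T (l,r)))"
  proof -
    have d1: "(r,r) \<notin> (\<lambda>l. (r,l)) ` L \<union> (\<lambda>l. (l,r)) ` L" unfolding L_def by auto
    have d2: "(\<lambda>l. (r,l)) ` L \<inter> (\<lambda>l. (l,r)) ` L = {}" unfolding L_def by auto
    have i1: "inj_on (\<lambda>l. (r,l)) L" "inj_on (\<lambda>l. (l,r)) L" by (auto simp: inj_on_def)
    show ?thesis using fL d1 d2 by (simp add: sum.insert sum.union_disjoint sum.reindex[OF i1(1)] sum.reindex[OF i1(2)])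
  qed
  also have "\<dots> = X $$ (r,r)"
  proof -
    have a: "T (r,r) = X $$ (r,r) - (1/2) * (\<Sum>l\<in>L. cf' X r l + cf' X l r)"
      unfolding T_def bco_def bs_def L_def by simp
    have b: "(\<Sum>l\<in>L. T (r,l)) = (\<Sum>l\<in>L. cf' X r l / 2)"
      unfolding T_def bco_def bs_def L_def by (intro sum.cong refl) auto
    have c: "(\<Sum>l\<in>L. T (l,r)) = (\<Sum>l\<in>L. cf' X l r / 2)"
      unfolding T_def bco_def bs_def L_def by (intro sum.cong refl) auto
    show ?thesis unfolding a b c
      by (simp add: sum.distrib sum_divide_distrib[symmetric] field_simps)
  qed
  finally show ?thesis unfolding T_def .
qed

lemma decomp:
  assumes X: "X \<in> carrier_mat n n"
  shows "X = msum n (KK n) (bco n X) (bsig n)"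
proof (rule eq_matI)
  fix r s assume "r < dim_row (msum n (KK n) (bco n X) (bsig n))" "s < dim_col (msum n (KK n) (bco n X) (bsig n))"
  then have rs: "r < n" "s < n" by auto
  have "msum n (KK n) (bco n X) (bsig n) $$ (r,s) = (\<Sum>k\<in>KK n. bco n X k * bs (fst k) (snd k) r s)"
    using rs by simp
  also have "\<dots> = X $$ (r,s)"
    using decomp_offdiag[OF X rs] decomp_diag[OF X rs(1)] by (cases "r = s") auto
  finally show "X $$ (r,s) = msum n (KK n) (bco n X) (bsig n) $$ (r,s)" by simp
qed (use X in auto)

lemma cnj_sq: "Im (cnj w * w) = 0" "Re (cnj w * w) \<ge> 0"
  by (simp_all add: algebra_simps)

lemma bs_diag: "bs i i r s = (if r = i \<and> s = i then 1 else 0)" by (simp add: bs_def)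
lemma bs_lt: "i < j \<Longrightarrow> bs i j r s = (if (r = i \<or> r = j) \<and> (s = i \<or> s = j) then 1/2 else 0)" by (simp add: bs_def)
lemma bs_gt: "j < i \<Longrightarrow> bs i j r s = (if (r = i \<and> s = i) \<or> (r = j \<and> s = j) then 1/2 else if r = j \<and> s = i then \<i>/2
          else if r = i \<and> s = j then -\<i>/2 else 0)" by (simp add: bs_def)

lemma bsig_density:
  assumes k: "k \<in> KK n"
  shows "density n (bsig n k)"
proof -
  obtain i j where ij: "k = (i,j)" "i < n" "j < n" using k unfolding KK_def by auto
  have z: "\<And>r s. r \<notin> {i,j} \<or> s \<notin> {i,j} \<Longrightarrow> bs i j r s = 0"
  proof -
    fix r s assume h: "r \<notin> {i,j} \<or> s \<notin> {i,j}"
    have nc: "\<not> (r = i \<and> s = i)" "\<not> (r = j \<and> s = j)" "\<not> (r = j \<and> s = i)" "\<not> (r = i \<and> s = j)"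
      "\<not> ((r = i \<or> r = j) \<and> (s = i \<or> s = j))" using h by auto
    show "bs i j r s = 0" unfolding bs_def using nc by (simp only: if_False de_Morgan_conj[symmetric] disj_not1 simp_thms if_cancel)
  qed
  have S: "{i,j} \<subseteq> {..<n}" using ij by auto
  have q: "\<And>v. qf n (bsig n k) v = (\<Sum>r\<in>{i,j}. \<Sum>s\<in>{i,j}. cnj (v r) * bs i j r s * v s)"
  proof -
    fix v
    have "qf n (bsig n k) v = (\<Sum>r\<in>{i,j}. \<Sum>s\<in>{i,j}. cnj (v r) * bsig n k $$ (r,s) * v s)"
      by (rule qf_restrict[OF S]) (auto simp: ij(1) z)
    also have "\<dots> = (\<Sum>r\<in>{i,j}. \<Sum>s\<in>{i,j}. cnj (v r) * bs i j r s * v s)"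
      using S by (intro sum.cong refl) (auto simp: ij(1))
    finally show "qf n (bsig n k) v = (\<Sum>r\<in>{i,j}. \<Sum>s\<in>{i,j}. cnj (v r) * bs i j r s * v s)" .
  qed
  have form: "\<And>v. \<exists>w. qf n (bsig n k) v = (if i = j then 1 else 1/2) * (cnj w * w)"
  proof -
    fix v
    consider "i = j" | "i < j" | "j < i" by linarith
    then show "\<exists>w. qf n (bsig n k) v = (if i = j then 1 else 1/2) * (cnj w * w)"
    proof cases
      case 1
      have "qf n (bsig n k) v = cnj (v i) * v i" unfolding q using 1 by (simp add: bs_diag)
      then show ?thesis using 1 by (intro exI[of _ "v i"]) simp
    next
      case 2
      have b: "bs i j i i = 1/2" "bs i j i j = 1/2" "bs i j j i = 1/2" "bs i j j j = 1/2"
        using 2 by (simp_all add: bs_lt)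
      have "qf n (bsig n k) v = cnj (v i) * (1/2) * v i + cnj (v i) * (1/2) * v j + (cnj (v j) * (1/2) * v i + cnj (v j) * (1/2) * v j)"
        unfolding q using 2 by (simp add: b)
      also have "\<dots> = (1/2) * (cnj (v i + v j) * (v i + v j))" by (simp add: algebra_simps)
      finally show ?thesis using 2 by (intro exI[of _ "v i + v j"]) simp
    next
      case 3
      have b: "bs i j i i = 1/2" "bs i j i j = -\<i>/2" "bs i j j i = \<i>/2" "bs i j j j = 1/2"
        using 3 by (simp_all add: bs_gt)
      have "qf n (bsig n k) v = cnj (v i) * (1/2) * v i + cnj (v i) * (-\<i>/2) * v j + (cnj (v j) * (\<i>/2) * v i + cnj (v j) * (1/2) * v j)"
        unfolding q using 3 by (simp add: b)
      also have "\<dots> = (1/2) * (cnj (v j + \<i> * v i) * (v j + \<i> * v i))" by (simp add: algebra_simps)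
      finally show ?thesis using 3 by (intro exI[of _ "v j + \<i> * v i"]) simp
    qed
  qed
  have psd: "psd n (bsig n k)" unfolding psd_iff
  proof (intro conjI allI)
    fix v
    obtain w where w: "qf n (bsig n k) v = (if i = j then 1 else 1/2) * (cnj w * w)" using form by blast
    show "Im (qf n (bsig n k) v) = 0" "0 \<le> Re (qf n (bsig n k) v)" unfolding w using cnj_sq[of w] by auto
  qed simp
  have tr: "mtrace (bsig n k) = 1"
  proof -
    have "mtrace (bsig n k) = (\<Sum>r<n. bsig n k $$ (r,r))" by (rule mtrace_carrier[OF bsig_carrier])
    also have "\<dots> = (\<Sum>r<n. bs i j r r)" by (intro sum.cong refl) (simp add: ij(1))
    also have "\<dots> = (\<Sum>r\<in>{i,j}. bs i j r r)"
      by (rule sum.mono_neutral_right) (use S z in auto)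
    also have "\<dots> = 1"
    proof -
      consider "i = j" | "i < j" | "j < i" by linarith
      then show ?thesis by cases (simp_all add: bs_diag bs_lt bs_gt)
    qed
    finally show ?thesis .
  qed
  show ?thesis unfolding density_def using psd tr by simp
qed

lemma sum_offdiag_swap:
  fixes g :: "nat \<Rightarrow> nat \<Rightarrow> complex"
  shows "(\<Sum>i<n. \<Sum>l\<in>{..<n}-{i}. g l i) = (\<Sum>i<n. \<Sum>l\<in>{..<n}-{i}. g i l)"
proof -
  have e: "\<And>i h. (\<Sum>l\<in>{..<n}-{i}. h l) = (\<Sum>l<n. if l = i then 0 else h l)"
    by (rule sum.mono_neutral_cong_left) auto
  have "(\<Sum>i<n. \<Sum>l\<in>{..<n}-{i}. g l i) = (\<Sum>i<n. \<Sum>l<n. if l = i then 0 else g l i)" by (simp only: e)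
  also have "\<dots> = (\<Sum>l<n. \<Sum>i<n. if l = i then 0 else g l i)" by (rule sum.swap)
  also have "\<dots> = (\<Sum>i<n. \<Sum>l<n. if l = i then 0 else g i l)" by (intro sum.cong refl) auto
  also have "\<dots> = (\<Sum>i<n. \<Sum>l\<in>{..<n}-{i}. g i l)" by (simp only: e)
  finally show ?thesis .
qed

lemma bco_sum:
  assumes X: "X \<in> carrier_mat n n"
  shows "(\<Sum>k\<in>KK n. bco n X k) = mtrace X"
proof -
  define A where "A = (\<Sum>i<n. \<Sum>l\<in>{..<n}-{i}. cf' X i l)"
  have A2: "(\<Sum>i<n. \<Sum>l\<in>{..<n}-{i}. cf' X l i) = A" unfolding A_def by (rule sum_offdiag_swap)
  have "(\<Sum>k\<in>KK n. bco n X k) = (\<Sum>i<n. \<Sum>j<n. bco n X (i,j))"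
    unfolding KK_def by (simp add: sum.cartesian_product)
  also have "\<dots> = (\<Sum>i<n. bco n X (i,i) + (\<Sum>l\<in>{..<n}-{i}. cf' X i l))"
  proof (intro sum.cong refl)
    fix i assume i: "i \<in> {..<n}"
    have "(\<Sum>j<n. bco n X (i,j)) = bco n X (i,i) + (\<Sum>j\<in>{..<n}-{i}. bco n X (i,j))"
      using i by (simp add: sum.remove)
    also have "(\<Sum>j\<in>{..<n}-{i}. bco n X (i,j)) = (\<Sum>l\<in>{..<n}-{i}. cf' X i l)"
      by (intro sum.cong refl) (auto simp: bco_def)
    finally show "(\<Sum>j<n. bco n X (i,j)) = bco n X (i,i) + (\<Sum>l\<in>{..<n}-{i}. cf' X i l)" .
  qed
  also have "\<dots> = (\<Sum>i<n. X $$ (i,i)) - (1/2) * (A + A) + A"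
  proof -
    define S where "S i = (\<Sum>l\<in>{..<n}-{i}. cf' X i l)" for i
    define T where "T i = (\<Sum>l\<in>{..<n}-{i}. cf' X l i)" for i
    have b: "\<And>i. bco n X (i,i) = X $$ (i,i) - (1/2) * (S i + T i)"
      unfolding S_def T_def by (simp add: bco_def sum.distrib)
    have "(\<Sum>i<n. bco n X (i,i) + (\<Sum>l\<in>{..<n}-{i}. cf' X i l)) = (\<Sum>i<n. X $$ (i,i) - (1/2) * (S i + T i) + S i)"
      by (simp only: b S_def)
    also have "\<dots> = (\<Sum>i<n. X $$ (i,i)) - (1/2) * (sum S {..<n} + sum T {..<n}) + sum S {..<n}"
      by (simp add: sum.distrib sum_subtractf sum_divide_distrib[symmetric])
    also have "sum S {..<n} = A" unfolding S_def A_def ..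
    also have "sum T {..<n} = A" unfolding T_def using A2 .
    finally show ?thesis .
  qed
  also have "\<dots> = mtrace X" using X by (simp add: mtrace_carrier)
  finally show ?thesis .
qed

lemma cf'_real: assumes H: "hermitian n X" and ij: "i < n" "j < n" shows "Im (cf' X i j) = 0"
proof -
  note h = hermitian_D[OF H]
  show ?thesis
  proof (cases "i < j")
    case True
    have "X $$ (j,i) = cnj (X $$ (i,j))" using h(2)[OF ij] by simp
    then show ?thesis using True by (simp add: cf'_def)
  next
    case False
    have "X $$ (i,j) = cnj (X $$ (j,i))" using h(2)[OF ij(2) ij(1)] by simp
    then show ?thesis using False by (simp add: cf'_def)
  qed
qed

lemma bco_real: assumes H: "hermitian n X" and k: "k \<in> KK n" shows "Im (bco n X k) = 0"
proof -
  note h = hermitian_D[OF H]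
  obtain i j where ij: "k = (i,j)" "i < n" "j < n" using k unfolding KK_def by auto
  show ?thesis
  proof (cases "i = j")
    case True
    have d: "Im (X $$ (i,i)) = 0" using h(2)[OF ij(2) ij(2)] by (simp add: complex_eq_iff)
    have s: "Im (\<Sum>l\<in>{..<n}-{i}. cf' X i l + cf' X l i) = 0"
      unfolding Im_sum by (intro sum.neutral) (use cf'_real[OF H] ij in auto)
    show ?thesis using True d s ij by (simp add: bco_def)
  next
    case False
    then show ?thesis using cf'_real[OF H ij(2,3)] ij by (simp add: bco_def)
  qed
qed

lemma cf'_add: "X \<in> carrier_mat n n \<Longrightarrow> Y \<in> carrier_mat n n \<Longrightarrow> i < n \<Longrightarrow> j < n \<Longrightarrow> cf' (X + Y) i j = cf' X i j + cf' Y i j"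
  by (simp add: cf'_def algebra_simps)
lemma cf'_smult: "X \<in> carrier_mat n n \<Longrightarrow> i < n \<Longrightarrow> j < n \<Longrightarrow> cf' (a \<cdot>\<^sub>m X) i j = a * cf' X i j"
  by (simp add: cf'_def algebra_simps)

lemma bco_add: assumes X: "X \<in> carrier_mat n n" and Y: "Y \<in> carrier_mat n n" and k: "k \<in> KK n"
  shows "bco n (X + Y) k = bco n X k + bco n Y k"
proof -
  obtain i j where ij: "k = (i,j)" "i < n" "j < n" using k unfolding KK_def by auto
  have s: "(\<Sum>l\<in>{..<n}-{i}. cf' (X+Y) i l + cf' (X+Y) l i) = (\<Sum>l\<in>{..<n}-{i}. cf' X i l + cf' X l i) + (\<Sum>l\<in>{..<n}-{i}. cf' Y i l + cf' Y l i)"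
    unfolding sum.distrib[symmetric] by (intro sum.cong refl) (use X Y ij in \<open>auto simp: cf'_add\<close>)
  show ?thesis unfolding bco_def ij(1) fst_conv snd_conv s using X Y ij by (auto simp: cf'_add algebra_simps)
qed

lemma bco_smult: assumes X: "X \<in> carrier_mat n n" and k: "k \<in> KK n"
  shows "bco n (a \<cdot>\<^sub>m X) k = a * bco n X k"
proof -
  obtain i j where ij: "k = (i,j)" "i < n" "j < n" using k unfolding KK_def by auto
  have s: "(\<Sum>l\<in>{..<n}-{i}. cf' (a \<cdot>\<^sub>m X) i l + cf' (a \<cdot>\<^sub>m X) l i) = a * (\<Sum>l\<in>{..<n}-{i}. cf' X i l + cf' X l i)"
    unfolding sum_distrib_left by (intro sum.cong refl) (use X ij in \<open>auto simp: cf'_smult algebra_simps\<close>)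
  show ?thesis unfolding bco_def ij(1) fst_conv snd_conv s using X ij by (auto simp: cf'_smult algebra_simps)
qed

definition XiOf :: "sotf \<Rightarrow> nat \<Rightarrow> cmap" where
  "XiOf star n X = msum (n*n) (KK n) (bco n X) (\<lambda>k. star n n id (bsig n k) - F0 n (bsig n k))"

lemma msum_cong: "(\<And>k. k \<in> K \<Longrightarrow> c k = c' k) \<Longrightarrow> msum d K c M = msum d K c' M"
  unfolding msum_def by (intro cong_mat refl) (auto intro!: sum.cong)

lemma XiOf_linear: "linear_on n (n*n) (XiOf star n)"
  unfolding linear_on_def
proof (intro conjI ballI allI)
  fix X :: cmat assume "X \<in> carrier_mat n n" then show "XiOf star n X \<in> carrier_mat (n*n) (n*n)" by (simp add: XiOf_def)
next
  fix X Y :: cmat assume X: "X \<in> carrier_mat n n" and Y: "Y \<in> carrier_mat n n"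
  show "XiOf star n (X + Y) = XiOf star n X + XiOf star n Y"
    unfolding XiOf_def by (rule eq_matI) (auto simp: bco_add[OF X Y] algebra_simps simp flip: sum.distrib intro!: sum.cong)
next
  fix X :: cmat and c assume X: "X \<in> carrier_mat n n"
  show "XiOf star n (c \<cdot>\<^sub>m X) = c \<cdot>\<^sub>m XiOf star n X"
    unfolding XiOf_def by (rule eq_matI) (auto simp: bco_smult[OF X] sum_distrib_left algebra_simps)
qed

lemma sotf_rules: assumes "state_over_time_function star" "n > 0" "m > 0" "channel n m E" "density n \<rho>"
  shows "star n m E \<rho> \<in> carrier_mat (n*m) (n*m)" "ptr1 n m (star n m E \<rho>) = E \<rho>" "ptr2 n m (star n m E \<rho>) = \<rho>"
  using assms unfolding state_over_time_function_def by blast+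

lemma key:
  assumes S: "state_over_time_function star" and AE: "axiom_E_with star ext" and n: "n > 0" and d: "density n \<rho>"
  shows "star n n id \<rho> = F0 n \<rho> + XiOf star n \<rho>"
proof -
  interpret cvx "star n n id" n "n*n"
  proof
    fix \<rho>1 \<rho>2 p assume "density n \<rho>1" "density n \<rho>2" "0 \<le> (p::real)" "p \<le> 1"
    then show "star n n id (complex_of_real p \<cdot>\<^sub>m \<rho>1 + complex_of_real (1-p) \<cdot>\<^sub>m \<rho>2) = complex_of_real p \<cdot>\<^sub>m star n n id \<rho>1 + complex_of_real (1-p) \<cdot>\<^sub>m star n n id \<rho>2"
      by (rule star_convex[OF S AE n n channel_id])
  next
    fix \<rho> assume "density n \<rho>" then show "star n n id \<rho> \<in> carrier_mat (n*n) (n*n)"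
      by (rule sotf_rules(1)[OF S n n channel_id])
  qed
  have c: "\<rho> \<in> carrier_mat n n" using d density_carrier by blast
  have H: "hermitian n \<rho>" using d unfolding density_def by (blast intro: psd_hermitian)
  define cr where "cr k = Re (bco n \<rho> k)" for k
  have bc: "\<And>k. k \<in> KK n \<Longrightarrow> bco n \<rho> k = complex_of_real (cr k)"
    unfolding cr_def using bco_real[OF H] by (simp add: complex_eq_iff)
  have dec: "\<rho> = msum n (KK n) (\<lambda>k. complex_of_real (cr k)) (bsig n)"
    using decomp[OF c] msum_cong[of "KK n" "bco n \<rho>" "\<lambda>k. complex_of_real (cr k)"] bc by metis
  have sc: "sum cr (KK n) = 1"
  proof -
    have "complex_of_real (sum cr (KK n)) = (\<Sum>k\<in>KK n. bco n \<rho> k)" unfolding of_real_sum using bc by simp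
    also have "\<dots> = 1" using bco_sum[OF c] d unfolding density_def by simp
    finally show ?thesis by (metis of_real_eq_1_iff)
  qed
  have A: "star n n id \<rho> = msum (n*n) (KK n) (\<lambda>k. complex_of_real (cr k)) (\<lambda>k. star n n id (bsig n k))"
    by (rule affine[OF KK_finite _ sc d dec]) (simp add: bsig_density)
  have B: "F0 n \<rho> = msum (n*n) (KK n) (\<lambda>k. complex_of_real (cr k)) (\<lambda>k. F0 n (bsig n k))"
    by (subst dec, rule linear_on_msum[OF F0_linear]) auto
  have Mc: "\<And>k. k \<in> KK n \<Longrightarrow> star n n id (bsig n k) \<in> carrier_mat (n*n) (n*n)"
    using sotf_rules(1)[OF S n n channel_id] bsig_density by blast
  show ?thesis
  proof (rule eq_matI)
    fix r s assume "r < dim_row (F0 n \<rho> + XiOf star n \<rho>)" "s < dim_col (F0 n \<rho> + XiOf star n \<rho>)"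
    then have rs: "r < n*n" "s < n*n" by (auto simp: XiOf_def)
    have "(F0 n \<rho> + XiOf star n \<rho>) $$ (r,s) = F0 n \<rho> $$ (r,s) + (\<Sum>k\<in>KK n. bco n \<rho> k * (star n n id (bsig n k) - F0 n (bsig n k)) $$ (r,s))"
      using rs by (simp add: XiOf_def)
    also have "\<dots> = F0 n \<rho> $$ (r,s) + (\<Sum>k\<in>KK n. complex_of_real (cr k) * star n n id (bsig n k) $$ (r,s) - complex_of_real (cr k) * F0 n (bsig n k) $$ (r,s))"
      by (intro arg_cong2[where f = "(+)"] refl sum.cong) (use rs Mc bc in \<open>auto simp: algebra_simps\<close>)
    also have "\<dots> = star n n id \<rho> $$ (r,s)"
      apply (subst A, subst B) using rs by (simp add: sum_subtractf)
    finally show "star n n id \<rho> $$ (r,s) = (F0 n \<rho> + XiOf star n \<rho>) $$ (r,s)" by simp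
  qed (use sotf_rules(1)[OF S n n channel_id d] in \<open>auto simp: XiOf_def\<close>)
qed

lemma reorder_idx: "r < n*n \<Longrightarrow> c < n*n \<Longrightarrow> reorder n n A $$ (r,c) = A $$ (sg n r, sg n c)"
  by (simp add: reorder_def sg_def)

lemma XiOf_pi:
  assumes S: "state_over_time_function star" and AE: "axiom_E_with star ext" and J: "axiom_Jhat star" and n: "n > 0"
  shows "XiOf star n (1\<^sub>m n) = 0\<^sub>m (n*n) (n*n)"
proof -
  define \<pi> where "\<pi> = (1 / of_nat n) \<cdot>\<^sub>m (1\<^sub>m n :: cmat)"
  have dp: "density n \<pi>" unfolding \<pi>_def by (rule density_pi[OF n])
  have k: "star n n id \<pi> = F0 n \<pi> + XiOf star n \<pi>" by (rule key[OF S AE n dp])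
  have j: "star n n id \<pi> = (1 / of_nat n) \<cdot>\<^sub>m app2 n n n id (swap_op n)"
    using J n channel_id unfolding axiom_Jhat_def \<pi>_def by blast
  have ai: "app2 n n n id (swap_op n) = swap_op n" by (rule app2_id) simp
  have j2: "star n n id \<pi> = F0 n \<pi>" using j unfolding ai \<pi>_def F0_pi[OF n] .
  have z: "XiOf star n \<pi> = 0\<^sub>m (n*n) (n*n)"
  proof (rule eq_matI)
    fix r c assume "r < dim_row (0\<^sub>m (n*n) (n*n) :: cmat)" "c < dim_col (0\<^sub>m (n*n) (n*n) :: cmat)"
    then have rc: "r < n*n" "c < n*n" by auto
    have "F0 n \<pi> $$ (r,c) = F0 n \<pi> $$ (r,c) + XiOf star n \<pi> $$ (r,c)"
      using arg_cong[OF k[unfolded j2], of "\<lambda>M. M $$ (r,c)"] rc by (simp add: XiOf_def)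
    then show "XiOf star n \<pi> $$ (r,c) = 0\<^sub>m (n*n) (n*n) $$ (r,c)" using rc by simp
  qed (auto simp: XiOf_def)
  have one: "1\<^sub>m n = of_nat n \<cdot>\<^sub>m \<pi>" unfolding \<pi>_def using n by (intro eq_matI) auto
  have "XiOf star n (1\<^sub>m n) = of_nat n \<cdot>\<^sub>m XiOf star n \<pi>"
    unfolding one using XiOf_linear[of n star] unfolding linear_on_def \<pi>_def by simp
  also have "\<dots> = 0\<^sub>m (n*n) (n*n)" unfolding z by (intro eq_matI) auto
  finally show ?thesis .
qed

lemma XiOf_ptr:
  assumes S: "state_over_time_function star" and n: "n > 0" and X: "X \<in> carrier_mat n n"
  shows "ptr1 n n (XiOf star n X) = 0\<^sub>m n n" "ptr2 n n (XiOf star n X) = 0\<^sub>m n n"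
proof -
  define M where "M k = star n n id (bsig n k) - F0 n (bsig n k)" for k
  have Mc: "\<And>k. k \<in> KK n \<Longrightarrow> star n n id (bsig n k) \<in> carrier_mat (n*n) (n*n)"
    using sotf_rules(1)[OF S n n channel_id] bsig_density by blast
  have p1: "\<And>k j l. k \<in> KK n \<Longrightarrow> j < n \<Longrightarrow> l < n \<Longrightarrow> (\<Sum>i<n. M k $$ (i*n+j, i*n+l)) = 0"
  proof -
    fix k j l assume k: "k \<in> KK n" and jl: "j < n" "l < n"
    have a: "ptr1 n n (star n n id (bsig n k)) = bsig n k"
      using sotf_rules(2)[OF S n n channel_id bsig_density[OF k]] by simp
    have b: "ptr1 n n (F0 n (bsig n k)) = bsig n k" by (rule ptr1_F0[OF bsig_carrier n])
    have "(\<Sum>i<n. M k $$ (i*n+j, i*n+l)) = (\<Sum>i<n. star n n id (bsig n k) $$ (i*n+j, i*n+l)) - (\<Sum>i<n. F0 n (bsig n k) $$ (i*n+j, i*n+l))"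
      unfolding M_def sum_subtractf[symmetric] by (intro sum.cong refl) (use Mc[OF k] jl in \<open>auto simp: dm_lt\<close>)
    also have "\<dots> = ptr1 n n (star n n id (bsig n k)) $$ (j,l) - ptr1 n n (F0 n (bsig n k)) $$ (j,l)"
      using jl by (simp add: ptr1_def)
    also have "\<dots> = 0" unfolding a b by simp
    finally show "(\<Sum>i<n. M k $$ (i*n+j, i*n+l)) = 0" .
  qed
  have p2: "\<And>k j l. k \<in> KK n \<Longrightarrow> j < n \<Longrightarrow> l < n \<Longrightarrow> (\<Sum>i<n. M k $$ (j*n+i, l*n+i)) = 0"
  proof -
    fix k j l assume k: "k \<in> KK n" and jl: "j < n" "l < n"
    have a: "ptr2 n n (star n n id (bsig n k)) = bsig n k"
      using sotf_rules(3)[OF S n n channel_id bsig_density[OF k]] by simp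
    have b: "ptr2 n n (F0 n (bsig n k)) = bsig n k" by (rule ptr2_F0[OF bsig_carrier n])
    have "(\<Sum>i<n. M k $$ (j*n+i, l*n+i)) = (\<Sum>i<n. star n n id (bsig n k) $$ (j*n+i, l*n+i)) - (\<Sum>i<n. F0 n (bsig n k) $$ (j*n+i, l*n+i))"
      unfolding M_def sum_subtractf[symmetric] by (intro sum.cong refl) (use Mc[OF k] jl in \<open>auto simp: dm_lt\<close>)
    also have "\<dots> = ptr2 n n (star n n id (bsig n k)) $$ (j,l) - ptr2 n n (F0 n (bsig n k)) $$ (j,l)"
      using jl by (simp add: ptr2_def)
    also have "\<dots> = 0" unfolding a b by simp
    finally show "(\<Sum>i<n. M k $$ (j*n+i, l*n+i)) = 0" .
  qed
  show "ptr1 n n (XiOf star n X) = 0\<^sub>m n n"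
  proof (rule eq_matI)
    fix j l assume "j < dim_row (0\<^sub>m n n :: cmat)" "l < dim_col (0\<^sub>m n n :: cmat)"
    then have jl: "j < n" "l < n" by auto
    have "ptr1 n n (XiOf star n X) $$ (j,l) = (\<Sum>i<n. \<Sum>k\<in>KK n. bco n X k * M k $$ (i*n+j, i*n+l))"
      using jl by (simp add: ptr1_def XiOf_def M_def dm_lt)
    also have "\<dots> = (\<Sum>k\<in>KK n. bco n X k * (\<Sum>i<n. M k $$ (i*n+j, i*n+l)))"
      by (simp add: sum.swap[of _ "{..<n}"] sum_distrib_left)
    also have "\<dots> = 0" using p1 jl by simp
    finally show "ptr1 n n (XiOf star n X) $$ (j,l) = 0\<^sub>m n n $$ (j,l)" using jl by simp
  qed (auto simp: ptr1_def)
  show "ptr2 n n (XiOf star n X) = 0\<^sub>m n n"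
  proof (rule eq_matI)
    fix j l assume "j < dim_row (0\<^sub>m n n :: cmat)" "l < dim_col (0\<^sub>m n n :: cmat)"
    then have jl: "j < n" "l < n" by auto
    have "ptr2 n n (XiOf star n X) $$ (j,l) = (\<Sum>i<n. \<Sum>k\<in>KK n. bco n X k * M k $$ (j*n+i, l*n+i))"
      using jl by (simp add: ptr2_def XiOf_def M_def dm_lt)
    also have "\<dots> = (\<Sum>k\<in>KK n. bco n X k * (\<Sum>i<n. M k $$ (j*n+i, l*n+i)))"
      by (simp add: sum.swap[of _ "{..<n}"] sum_distrib_left)
    also have "\<dots> = 0" using p2 jl by simp
    finally show "ptr2 n n (XiOf star n X) $$ (j,l) = 0\<^sub>m n n $$ (j,l)" using jl by simp
  qed (auto simp: ptr2_def)
qed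

lemma forward:
  assumes S: "state_over_time_function star" and EP: "axiom_EP star" and J: "axiom_Jhat star"
  shows "Xi_basic (XiOf star)" "induced_by star (XiOf star)"
proof -
  obtain ext where AE: "axiom_E_with star ext" and AP: "axiom_P_with star ext" using EP unfolding axiom_EP_def by blast
  note R = AE_rules[OF AE]
  show "Xi_basic (XiOf star)" unfolding Xi_basic_def
    using XiOf_linear XiOf_pi[OF S AE J] XiOf_ptr[OF S] by blast
  show "induced_by star (XiOf star)" unfolding induced_by_def
  proof (intro conjI allI impI)
    fix n \<rho> assume "n > 0" "density n \<rho>"
    then show "star n n id \<rho> = id_star_form n (XiOf star n) \<rho>"
      unfolding id_star_form_F0 by (rule key[OF S AE])
  next
    fix n m E \<rho> assume n: "n > 0" and m: "m > 0" and h: "channel n m E \<and> density n \<rho>"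
    define Z where "Z = reorder n n (star n n id \<rho>)"
    have qZ: "qsst star n n Z" unfolding qsst_def Z_def using h channel_id by blast
    have P: "reorder m n (ptr1 n (m*n) (ext n m n E Z)) = star n m (E \<circ> id) \<rho>"
      using AP n m h channel_id unfolding axiom_P_with_def Z_def by blast
    have "ptr1 n (m*n) (ext n m n E Z) = app1 n m n E Z" by (rule R(4)[OF n m n _ qZ]) (use h in blast)
    then have "star n m E \<rho> = reorder m n (app1 n m n E (reorder n n (star n n id \<rho>)))"
      using P unfolding Z_def by simp
    also have "\<dots> = app2 n n m E (star n n id \<rho>)" by (rule reorder_app1)
    finally show "star n m E \<rho> = app2 n n m E (star n n id \<rho>)" .
  qed
qed

lemma forward_T:
  assumes S: "state_over_time_function star" and T: "axiom_T star"
  shows "\<forall>n>0. \<forall>X\<in>carrier_mat n n. swap_op n * XiOf star n X * swap_op n = XiOf star n X"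
proof (intro allI impI ballI)
  fix n and X :: cmat assume n: "n > 0" and X: "X \<in> carrier_mat n n"
  define M where "M k = star n n id (bsig n k) - F0 n (bsig n k)" for k
  have Mc: "\<And>k. k \<in> KK n \<Longrightarrow> star n n id (bsig n k) \<in> carrier_mat (n*n) (n*n)"
    using sotf_rules(1)[OF S n n channel_id] bsig_density by blast
  have sym: "\<And>k r c. k \<in> KK n \<Longrightarrow> r < n*n \<Longrightarrow> c < n*n \<Longrightarrow> M k $$ (sg n r, sg n c) = M k $$ (r,c)"
  proof -
    fix k r c assume k: "k \<in> KK n" and rc: "r < n*n" "c < n*n"
    have a: "reorder n n (star n n id (bsig n k)) = star n n id (bsig n k)"
      using T n bsig_density[OF k] swap_conj[OF Mc[OF k]] unfolding axiom_T_def by metis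
    have b: "reorder n n (F0 n (bsig n k)) = F0 n (bsig n k)" by (rule reorder_F0[OF bsig_carrier])
    have "star n n id (bsig n k) $$ (sg n r, sg n c) = star n n id (bsig n k) $$ (r,c)"
      using arg_cong[OF a, of "\<lambda>A. A $$ (r,c)"] rc by (simp add: reorder_idx)
    moreover have "F0 n (bsig n k) $$ (sg n r, sg n c) = F0 n (bsig n k) $$ (r,c)"
      using arg_cong[OF b, of "\<lambda>A. A $$ (r,c)"] rc by (simp add: reorder_idx)
    ultimately show "M k $$ (sg n r, sg n c) = M k $$ (r,c)"
      unfolding M_def using rc sg_lt Mc[OF k] by simp
  qed
  have XC: "XiOf star n X \<in> carrier_mat (n*n) (n*n)" by (simp add: XiOf_def)
  show "swap_op n * XiOf star n X * swap_op n = XiOf star n X"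
    unfolding swap_conj[OF XC]
  proof (rule eq_matI)
    fix r c assume "r < dim_row (XiOf star n X)" "c < dim_col (XiOf star n X)"
    then have rc: "r < n*n" "c < n*n" by (auto simp: XiOf_def)
    have "reorder n n (XiOf star n X) $$ (r,c) = (\<Sum>k\<in>KK n. bco n X k * M k $$ (sg n r, sg n c))"
      using rc sg_lt by (simp add: reorder_idx XiOf_def M_def)
    also have "\<dots> = (\<Sum>k\<in>KK n. bco n X k * M k $$ (r,c))" by (intro sum.cong refl) (simp add: sym rc)
    also have "\<dots> = XiOf star n X $$ (r,c)" using rc by (simp add: XiOf_def M_def)
    finally show "reorder n n (XiOf star n X) $$ (r,c) = XiOf star n X $$ (r,c)" .
  qed (auto simp: reorder_def XiOf_def)
qed

lemma forward_H:
  assumes S: "state_over_time_function star" and H: "axiom_H star"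
  shows "\<forall>n>0. hermitian_preserving n (n*n) (XiOf star n)"
  unfolding hermitian_preserving_def
proof (intro allI impI)
  fix n and X :: cmat assume n: "n > 0" and HX: "hermitian n X"
  note hx = hermitian_D[OF HX]
  define M where "M k = star n n id (bsig n k) - F0 n (bsig n k)" for k
  have Mc: "\<And>k. k \<in> KK n \<Longrightarrow> star n n id (bsig n k) \<in> carrier_mat (n*n) (n*n)"
    using sotf_rules(1)[OF S n n channel_id] bsig_density by blast
  have hM: "\<And>k r c. k \<in> KK n \<Longrightarrow> r < n*n \<Longrightarrow> c < n*n \<Longrightarrow> cnj (M k $$ (r,c)) = M k $$ (c,r)"
  proof -
    fix k r c assume k: "k \<in> KK n" and rc: "r < n*n" "c < n*n"
    have a: "hermitian (n*n) (star n n id (bsig n k))" using H n bsig_density[OF k] channel_id unfolding axiom_H_def by blast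
    have hb: "hermitian n (bsig n k)" using bsig_density[OF k] unfolding density_def by (blast intro: psd_hermitian)
    have b: "hermitian (n*n) (F0 n (bsig n k))" by (rule F0_hermitian[OF hb])
    show "cnj (M k $$ (r,c)) = M k $$ (c,r)"
      unfolding M_def using rc Mc[OF k] hermitian_D(2)[OF a rc] hermitian_D(2)[OF b rc] by simp
  qed
  have br: "\<And>k. k \<in> KK n \<Longrightarrow> cnj (bco n X k) = bco n X k"
    using bco_real[OF HX] by (simp add: complex_eq_iff)
  show "hermitian (n*n) (XiOf star n X)" unfolding hermitian_def
  proof (intro conjI allI impI)
    fix i j assume ij: "i < n*n" "j < n*n"
    have "cnj (XiOf star n X $$ (i,j)) = (\<Sum>k\<in>KK n. cnj (bco n X k) * cnj (M k $$ (i,j)))"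
      using ij by (simp add: XiOf_def M_def)
    also have "\<dots> = (\<Sum>k\<in>KK n. bco n X k * M k $$ (j,i))" by (intro sum.cong refl) (simp add: br hM ij)
    also have "\<dots> = XiOf star n X $$ (j,i)" using ij by (simp add: XiOf_def M_def)
    finally show "XiOf star n X $$ (j,i) = cnj (XiOf star n X $$ (i,j))" by simp
  qed (simp add: XiOf_def)
qed

theorem proposition8:
  fixes star :: sotf
  assumes "state_over_time_function star"
  shows "((axiom_T star \<and> axiom_EP star \<and> axiom_Jhat star) \<longleftrightarrow>
           (\<exists>\<Xi>. Xi_basic \<Xi> \<and>
              (\<forall>n>0. \<forall>X\<in>carrier_mat n n.
                 swap_op n * \<Xi> n X * swap_op n = \<Xi> n X) \<and>
              induced_by star \<Xi>)) \<and>
         ((axiom_H star \<and> axiom_EP star \<and> axiom_Jhat star) \<longleftrightarrow>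
           (\<exists>\<Xi>. Xi_basic \<Xi> \<and>
              (\<forall>n>0. hermitian_preserving n (n*n) (\<Xi> n)) \<and>
              induced_by star \<Xi>))"
proof (rule conjI; rule iffI)
  assume h: "axiom_T star \<and> axiom_EP star \<and> axiom_Jhat star"
  show "\<exists>\<Xi>. Xi_basic \<Xi> \<and> (\<forall>n>0. \<forall>X\<in>carrier_mat n n. swap_op n * \<Xi> n X * swap_op n = \<Xi> n X) \<and> induced_by star \<Xi>"
    using forward[OF assms] forward_T[OF assms] h by blast
next
  assume "\<exists>\<Xi>. Xi_basic \<Xi> \<and> (\<forall>n>0. \<forall>X\<in>carrier_mat n n. swap_op n * \<Xi> n X * swap_op n = \<Xi> n X) \<and> induced_by star \<Xi>"
  then obtain Xi where x: "Xi_basic Xi" "\<forall>n>0. \<forall>X\<in>carrier_mat n n. swap_op n * Xi n X * swap_op n = Xi n X" "induced_by star Xi"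
    by blast
  show "axiom_T star \<and> axiom_EP star \<and> axiom_Jhat star"
    using backward[OF assms x(1) x(3)] backward_T[OF assms x(1) x(3) x(2)] by blast
next
  assume h: "axiom_H star \<and> axiom_EP star \<and> axiom_Jhat star"
  show "\<exists>\<Xi>. Xi_basic \<Xi> \<and> (\<forall>n>0. hermitian_preserving n (n*n) (\<Xi> n)) \<and> induced_by star \<Xi>"
    using forward[OF assms] forward_H[OF assms] h by blast
next
  assume "\<exists>\<Xi>. Xi_basic \<Xi> \<and> (\<forall>n>0. hermitian_preserving n (n*n) (\<Xi> n)) \<and> induced_by star \<Xi>"
  then obtain Xi where x: "Xi_basic Xi" "\<forall>n>0. hermitian_preserving n (n*n) (Xi n)" "induced_by star Xi"
    by blast
  show "axiom_H star \<and> axiom_EP star \<and> axiom_Jhat star"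
    using backward[OF assms x(1) x(3)] backward_H[OF assms x(1) x(3) x(2)] by blast
qed


end
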